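(* For every $\mathfrak{r}\in L^2(\mathfrak{B})$ there exists a unique $\mathfrak{p}_h\in\mathfrak{L}^2_h$ such that $$(\mathfrak{D}_h\mathfrak{p}_h,\mathfrak{D}_h\mathfrak{w}_h)_{\mathfrak{K}^{-1},h}=(\mathfrak{r},\mathfrak{w}_h)\qquad\forall\,\mathfrak{w}_h\in\mathfrak{L}^2_h.$$
   Context: Standing setting. $\Omega\subset\mathbb{R}^n$ ($n\in\{2,3\}$) is a bounded connected polygonal/polyhedral domain with outward normal $\bm{n}$. $\mathcal{F}$ is a finite collection (forest) of pairwise disjoint finite rooted trees, each with at least two nodes; $\mathcal{N}$ is the set of all nodes and $\mathcal{E}$ the set of all edges. Each tree has exactly one root, and the root has exactly one neighbour. The nodes are partitioned into root nodes $\mathcal{N}_R$, interior nodes $\mathcal{N}_I$ (non-root nodes of degree $\ge2$) and terminal nodes $\mathcal{N}_T$ (non-root nodes of degree $1$); $\mathcal{N}_R=\mathcal{N}_D\sqcup\mathcal{N}_N$ (Dirichlet and Neumann roots), $\mathcal{N}_D\neq\emptyset$. For a node $i$, $\mathcal{N}_i$ is its set of neighbours; for $i\in\mathcal{N}_R\cup\mathcal{N}_T$ its unique neighbour is also denoted $\mathcal{N}_i$. Edges are oriented away from the root; $e(i,j)$ is the edge oriented from $i$ to $j$. A network flux is $q^N\in\mathbb{R}^{\mathcal{E}}$, written $q^N_{i,j}$ for $e(i,j)$, with $q^N_{j,i}:=-q^N_{i,j}$. $k^N_e>0$ for $e\in\mathcal{E}$. $\mathcal{M}$ is a conforming, shape-regular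 mesh of $\Omega$ of mesh size $h$, consisting of simplices or of rectangles/rectangular cuboids. For each $i\in\mathcal{N}_T$: $B_i\subseteq\Omega$ is a union of elements of $\mathcal{M}$ ($\mathcal{M}_i$ the elements contained in $B_i$), and $k_i^S:\Omega\to[0,C_{k^S}]$ vanishes outside $B_i$, is constant on each element of $\mathcal{M}$, and satisfies $\int_{B_i}k_i^S\,\mathrm{d}\bm{x}\ge c_{k^S}>0$. The permeability is $k^D=\kappa_\tau I$ on each $\tau\in\mathcal{M}$ with constants $\kappa_\tau>0$. $L^2(\mathfrak{B}):=L^2(\Omega)\times\ell^2(\mathcal{N}\setminus\mathcal{N}_D)$ with inner product $(\mathfrak{p},\mathfrak{w}):=\int_\Omega p^Dw^D+\sum_{i\in\mathcal{N}\setminus\mathcal{N}_D}p_i^Nw_i^N$. $H_h(\operatorname{div},\mathcal{M})$ is the lowest-order Raviart–Thomas space, $H_{h,0}(\operatorname{div},\mathcal{M})$ its subspace with zero normal component on $\partial\Omega$, $P_0$ = piecewise constants; $H_{h,0}(\operatorname{div},\mathfrak{B}):=H_{h,0}(\operatorname{div},\mathcal{M})\times\prod_{i\in\mathcal{N}_T}P_0(\mathcal{M}_i)\times\mathbb{R}^{\mathcal{E}}$ and $\mathfrak{L}^2_h:=P_0(\mathcal{M})\times\ell^2(\mathcal{N}\setminus\mathcal{N}_D)$. For $\mathfrak{q}=[\bm{q}^D,q^S,q^N]$, $\mathfrak{D}\cdot\mathfrak{q}:=[u^D,u^N]$ with $u^D=\nabla\cdot\bm{q}^D-\sum_{i\in\mathcal{N}_T}k_i^Sq_i^S$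 ($q_i^S$ extended by zero outside $B_i$), $u_i^N=-\sum_{j\in\mathcal{N}_i}q^N_{j,i}$ ($i\in\mathcal{N}_I\cup\mathcal{N}_N$), $u_i^N=\int_{B_i}k_i^Sq_i^S-q^N_{\mathcal{N}_i,i}$ ($i\in\mathcal{N}_T$). Lumped inner product: for $\tau\in\mathcal{M}$ and a face $f$ of $\tau$ let $\bm{n}_f$ be the outward unit normal, $|f|$ the $(n-1)$-measure, $d_f$ the distance from $f$ to the barycenter of $\tau$, $Q_f(\bm{v}):=\int_f\bm{v}\cdot\bm{n}_f\,\mathrm{d}s$, $\omega_f:=\kappa_\tau^{-1}d_f/|f|$. Then $(\mathfrak{q}_h,\mathfrak{v}_h)_{\mathfrak{K}^{-1},h}:=\sum_{\tau\in\mathcal{M}}\sum_{f\subset\partial\tau}\omega_fQ_f(\bm{q}^D)Q_f(\bm{v}^D)+\sum_{i\in\mathcal{N}_T}\int_{B_i}q_i^Sv_i^S+\sum_{e\in\mathcal{E}}(k^N_e)^{-1}q^N_ev^N_e$. Discrete gradient: $\mathfrak{D}_h:\mathfrak{L}^2_h\to H_{h,0}(\operatorname{div},\mathfrak{B})$ is the linear map defined by $(\mathfrak{D}_h\mathfrak{p}_h,\mathfrak{v}_h)_{\mathfrak{K}^{-1},h}=-(\mathfrak{p}_h,\mathfrak{D}\cdot\mathfrak{v}_h)$ for all $\mathfrak{v}_h\in H_{h,0}(\operatorname{div},\mathfrak{B})$. (The TPFA problem is obtained from the mass-lumped mixed system by eliminating the flux $\mathfrak{q}_h=-\mathfrak{D}_h\mathfrak{p}_h$.)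 *)

theory Defs
  imports "HOL-Analysis.Analysis"
begin

text \<open>Elements of the mesh are subsets of the Euclidean space 'a; faces are abstract
 objects of type 'f (the lowest-order Raviart-Thomas space is represented by its face
 flux degrees of freedom); network nodes have type 'n.  The forest is encoded by a parent
 map: edge e(parent j, j) for every non-root node j (edges oriented away from the root).\<close>

record ('a, 'f, 'n) setting =
  elems  :: "'a set set"
  mfaces :: "'f set"
  fcs    :: "'a set \<Rightarrow> 'f set"
  osgn   :: "'a set \<Rightarrow> 'f \<Rightarrow> real" \<comment> \<open>+1/-1: n_f(tau) = osgn tau f * global normal of f\<close>
  farea  :: "'f \<Rightarrow> real"
  fdist  :: "'a set \<Rightarrow> 'f \<Rightarrow> real" \<comment> \<open>d_f (distance of f to the barycenter of tau)\<close>
  kappa  :: "'a set \<Rightarrow> real"        \<comment> \<open>k^D = kappa_tau I on tau\<close>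
  nodes  :: "'n set"
  roots  :: "'n set"
  droots :: "'n set"
  par    :: "'n \<Rightarrow> 'n"
  Msub   :: "'n \<Rightarrow> 'a set set"
  kS     :: "'n \<Rightarrow> 'a set \<Rightarrow> real" \<comment> \<open>element values of k_i^S\<close>
  kN     :: "'n \<times> 'n \<Rightarrow> real"

definition Omega :: "('a, 'f, 'n) setting \<Rightarrow> 'a set" where
  "Omega S = \<Union> (elems S)"

definition cells :: "('a, 'f, 'n) setting \<Rightarrow> 'f \<Rightarrow> 'a set set" where
  "cells S f = {\<tau> \<in> elems S. f \<in> fcs S \<tau>}"

definition bfaces :: "('a, 'f, 'n) setting \<Rightarrow> 'f set" where
  "bfaces S = {f \<in> mfaces S. card (cells S f) = 1}"

definition nbrs :: "('a, 'f, 'n) setting \<Rightarrow> 'n \<Rightarrow> 'n set" where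
  "nbrs S i = {j \<in> nodes S - roots S. par S j = i} \<union> (if i \<in> roots S then {} else {par S i})"

definition edges :: "('a, 'f, 'n) setting \<Rightarrow> ('n \<times> 'n) set" where
  "edges S = {(par S j, j) | j. j \<in> nodes S - roots S}"

definition inodes :: "('a, 'f, 'n) setting \<Rightarrow> 'n set" where
  "inodes S = {i \<in> nodes S - roots S. card (nbrs S i) \<ge> 2}"

definition tnodes :: "('a, 'f, 'n) setting \<Rightarrow> 'n set" where
  "tnodes S = {i \<in> nodes S - roots S. card (nbrs S i) = 1}"

definition B :: "('a, 'f, 'n) setting \<Rightarrow> 'n \<Rightarrow> 'a set" where
  "B S i = \<Union> (Msub S i)"

definition pc :: "('a::euclidean_space, 'f, 'n) setting \<Rightarrow> ('a set \<Rightarrow> real) \<Rightarrow> 'a \<Rightarrow> real" where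
  "pc S w x = (\<Sum>\<tau>\<in>elems S. w \<tau> * indicator \<tau> x)"

definition rooted_forest :: "('a, 'f, 'n) setting \<Rightarrow> bool" where
  "rooted_forest S \<longleftrightarrow>
     finite (nodes S) \<and> roots S \<subseteq> nodes S \<and>
     (\<forall>j \<in> nodes S - roots S. par S j \<in> nodes S) \<and>
     (\<forall>j \<in> nodes S. \<exists>k. (par S ^^ k) j \<in> roots S) \<and>
     (\<forall>r \<in> roots S. card {j \<in> nodes S - roots S. par S j = r} = 1) \<and>
     droots S \<subseteq> roots S \<and> droots S \<noteq> {}"

definition mesh_ok :: "('a::euclidean_space, 'f, 'n) setting \<Rightarrow> bool" where
  "mesh_ok S \<longleftrightarrow>
     DIM('a) \<in> {2, 3} \<and>
     finite (elems S) \<and> elems S \<noteq> {} \<and>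
     (\<forall>\<tau> \<in> elems S. compact \<tau> \<and> measure lebesgue \<tau> > 0 \<and> kappa S \<tau> > 0) \<and>
     (\<forall>\<tau>1 \<in> elems S. \<forall>\<tau>2 \<in> elems S. \<tau>1 \<noteq> \<tau>2 \<longrightarrow> \<tau>1 \<inter> \<tau>2 \<in> null_sets lebesgue) \<and>
     finite (mfaces S) \<and>
     (\<forall>\<tau> \<in> elems S. fcs S \<tau> \<subseteq> mfaces S) \<and>
     (\<forall>\<tau> \<in> elems S. \<forall>f \<in> fcs S \<tau>. osgn S \<tau> f \<in> {-1, 1} \<and> fdist S \<tau> f > 0) \<and>
     (\<forall>f \<in> mfaces S. farea S f > 0 \<and> 1 \<le> card (cells S f) \<and> card (cells S f) \<le> 2) \<and>
     (\<forall>f \<in> mfaces S. \<forall>\<tau>1 \<in> cells S f. \<forall>\<tau>2 \<in> cells S f.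
         \<tau>1 \<noteq> \<tau>2 \<longrightarrow> osgn S \<tau>1 f = - osgn S \<tau>2 f) \<and>
     (\<forall>\<tau>1 \<in> elems S. \<forall>\<tau>2 \<in> elems S.
         (\<tau>1, \<tau>2) \<in> {(a, b). a \<in> elems S \<and> b \<in> elems S \<and> fcs S a \<inter> fcs S b \<noteq> {}}\<^sup>*)"

definition coupling_ok :: "('a::euclidean_space, 'f, 'n) setting \<Rightarrow> bool" where
  "coupling_ok S \<longleftrightarrow>
     (\<exists>C c. c > 0 \<and>
       (\<forall>i \<in> tnodes S.
          Msub S i \<subseteq> elems S \<and>
          (\<forall>\<tau>. 0 \<le> kS S i \<tau> \<and> kS S i \<tau> \<le> C) \<and>
          (\<forall>\<tau>. \<tau> \<notin> Msub S i \<longrightarrow> kS S i \<tau> = 0) \<and>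
          set_lebesgue_integral lebesgue (B S i) (pc S (kS S i)) \<ge> c)) \<and>
     (\<forall>e \<in> edges S. kN S e > 0)"

definition setting_ok :: "('a::euclidean_space, 'f, 'n) setting \<Rightarrow> bool" where
  "setting_ok S \<longleftrightarrow> rooted_forest S \<and> mesh_ok S \<and> coupling_ok S"

type_synonym ('a, 'f, 'n) dflux = "('f \<Rightarrow> real) \<times> ('n \<Rightarrow> 'a set \<Rightarrow> real) \<times> ('n \<times> 'n \<Rightarrow> real)"
type_synonym ('a, 'n) dpres = "('a set \<Rightarrow> real) \<times> ('n \<Rightarrow> real)"

text \<open>H_{h,0}(div, B): RT fluxes (face degrees of freedom, zero on boundary faces),
 piecewise constants on M_i for terminal i, and edge fluxes.\<close>
definition Hh0 :: "('a, 'f, 'n) setting \<Rightarrow> ('a, 'f, 'n) dflux set" where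
  "Hh0 S = {(qD, qS, qN).
      (\<forall>f. f \<notin> mfaces S - bfaces S \<longrightarrow> qD f = 0) \<and>
      (\<forall>i \<tau>. \<not> (i \<in> tnodes S \<and> \<tau> \<in> Msub S i) \<longrightarrow> qS i \<tau> = 0) \<and>
      (\<forall>e. e \<notin> edges S \<longrightarrow> qN e = 0)}"

definition Lh :: "('a, 'f, 'n) setting \<Rightarrow> ('a, 'n) dpres set" where
  "Lh S = {(pD, pN). (\<forall>\<tau>. \<tau> \<notin> elems S \<longrightarrow> pD \<tau> = 0) \<and>
                      (\<forall>i. i \<notin> nodes S - droots S \<longrightarrow> pN i = 0)}"

definition ipB :: "('a::euclidean_space, 'f, 'n) setting \<Rightarrow> ('a \<Rightarrow> real) \<times> ('n \<Rightarrow> real)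
                   \<Rightarrow> ('a \<Rightarrow> real) \<times> ('n \<Rightarrow> real) \<Rightarrow> real" where
  "ipB S r w = set_lebesgue_integral lebesgue (Omega S) (\<lambda>x. fst r x * fst w x)
              + (\<Sum>i \<in> nodes S - droots S. snd r i * snd w i)"

definition emb :: "('a::euclidean_space, 'f, 'n) setting \<Rightarrow> ('a, 'n) dpres \<Rightarrow> ('a \<Rightarrow> real) \<times> ('n \<Rightarrow> real)" where
  "emb S p = (pc S (fst p), snd p)"

text \<open>Q_f(v) for the face f of tau (outward normal of tau), and the RT divergence on tau
 (constant, equal to |tau|^{-1} times the outward flux by the divergence theorem).\<close>
definition Qf :: "('a, 'f, 'n) setting \<Rightarrow> 'a set \<Rightarrow> 'f \<Rightarrow> ('f \<Rightarrow> real) \<Rightarrow> real" where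
  "Qf S \<tau> f v = osgn S \<tau> f * v f"

definition divRT :: "('a::euclidean_space, 'f, 'n) setting \<Rightarrow> ('f \<Rightarrow> real) \<Rightarrow> 'a set \<Rightarrow> real" where
  "divRT S v \<tau> = (\<Sum>f \<in> fcs S \<tau>. Qf S \<tau> f v) / measure lebesgue \<tau>"

definition flx :: "('a, 'f, 'n) setting \<Rightarrow> ('n \<times> 'n \<Rightarrow> real) \<Rightarrow> 'n \<Rightarrow> 'n \<Rightarrow> real" where
  "flx S qN j i = (if (j, i) \<in> edges S then qN (j, i)
                   else if (i, j) \<in> edges S then - qN (i, j) else 0)"

definition divB :: "('a::euclidean_space, 'f, 'n) setting \<Rightarrow> ('a, 'f, 'n) dflux \<Rightarrow> ('a, 'n) dpres" where
  "divB S q = (case q of (qD, qS, qN) \<Rightarrow>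
     (\<lambda>\<tau>. divRT S qD \<tau> - (\<Sum>i \<in> tnodes S. kS S i \<tau> * qS i \<tau>),
      \<lambda>i. if i \<in> tnodes S
          then set_lebesgue_integral lebesgue (B S i) (\<lambda>x. pc S (kS S i) x * pc S (qS i) x)
               - flx S qN (par S i) i
          else - (\<Sum>j \<in> nbrs S i. flx S qN j i)))"

definition lumped :: "('a::euclidean_space, 'f, 'n) setting \<Rightarrow> ('a, 'f, 'n) dflux \<Rightarrow> ('a, 'f, 'n) dflux \<Rightarrow> real" where
  "lumped S q v = (case q of (qD, qS, qN) \<Rightarrow> case v of (vD, vS, vN) \<Rightarrow>
     (\<Sum>\<tau> \<in> elems S. \<Sum>f \<in> fcs S \<tau>.
         (fdist S \<tau> f / (kappa S \<tau> * farea S f)) * Qf S \<tau> f qD * Qf S \<tau> f vD)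
     + (\<Sum>i \<in> tnodes S. set_lebesgue_integral lebesgue (B S i) (\<lambda>x. pc S (qS i) x * pc S (vS i) x))
     + (\<Sum>e \<in> edges S. qN e * vN e / kN S e))"

definition Dh :: "('a::euclidean_space, 'f, 'n) setting \<Rightarrow> ('a, 'n) dpres \<Rightarrow> ('a, 'f, 'n) dflux" where
  "Dh S p = (THE q. q \<in> Hh0 S \<and>
               (\<forall>v \<in> Hh0 S. lumped S q v = - ipB S (emb S p) (emb S (divB S v))))"

definition L2Omega :: "('a::euclidean_space, 'f, 'n) setting \<Rightarrow> ('a \<Rightarrow> real) \<Rightarrow> bool" where
  "L2Omega S g \<longleftrightarrow> g \<in> borel_measurable lebesgue \<and>
                    set_integrable lebesgue (Omega S) (\<lambda>x. (g x)^2)"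

end

theory Submission
  imports Defs
begin

definition VI :: "'i set \<Rightarrow> ('i \<Rightarrow> real) set" where
  "VI I = {x. \<forall>k. k \<notin> I \<longrightarrow> x k = 0}"

definition GOK :: "'i set \<Rightarrow> (('i\<Rightarrow>real) \<Rightarrow> ('i\<Rightarrow>real) \<Rightarrow> real) \<Rightarrow> (('i\<Rightarrow>real) \<Rightarrow> real) \<Rightarrow> bool" where
 "GOK I a l \<longleftrightarrow>
  (\<forall>x y z. x\<in>VI I \<longrightarrow> y\<in>VI I \<longrightarrow> z\<in>VI I \<longrightarrow> a (\<lambda>k. x k + y k) z = a x z + a y z) \<and>
  (\<forall>c x z. x\<in>VI I \<longrightarrow> z\<in>VI I \<longrightarrow> a (\<lambda>k. c * x k) z = c * a x z) \<and>
  (\<forall>x y. x\<in>VI I \<longrightarrow> y\<in>VI I \<longrightarrow> a x y = a y x) \<and>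
  (\<forall>x. x\<in>VI I \<longrightarrow> x \<noteq> (\<lambda>k. 0) \<longrightarrow> a x x > 0) \<and>
  (\<forall>x y. x\<in>VI I \<longrightarrow> y\<in>VI I \<longrightarrow> l (\<lambda>k. x k + y k) = l x + l y) \<and>
  (\<forall>c x. x\<in>VI I \<longrightarrow> l (\<lambda>k. c * x k) = c * l x)"

lemma GOK_D:
  assumes "GOK I a l"
  shows "\<And>x y z. x\<in>VI I \<Longrightarrow> y\<in>VI I \<Longrightarrow> z\<in>VI I \<Longrightarrow> a (\<lambda>k. x k + y k) z = a x z + a y z"
  and "\<And>c x z. x\<in>VI I \<Longrightarrow> z\<in>VI I \<Longrightarrow> a (\<lambda>k. c * x k) z = c * a x z"
  and "\<And>x y. x\<in>VI I \<Longrightarrow> y\<in>VI I \<Longrightarrow> a x y = a y x"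
  and "\<And>x. x\<in>VI I \<Longrightarrow> x \<noteq> (\<lambda>k. 0) \<Longrightarrow> a x x > 0"
  and "\<And>x y. x\<in>VI I \<Longrightarrow> y\<in>VI I \<Longrightarrow> l (\<lambda>k. x k + y k) = l x + l y"
  and "\<And>c x. x\<in>VI I \<Longrightarrow> l (\<lambda>k. c * x k) = c * l x"
  using assms unfolding GOK_def by blast+

lemma G_exists:
  assumes "finite I" "GOK I a l"
  shows "\<exists>p\<in>VI I. \<forall>w\<in>VI I. a p w = l w"
  using assms
proof (induction I arbitrary: a l rule: finite_induct)
  case empty
  note P = GOK_D[OF empty.prems]
  have z: "VI {} = {\<lambda>k. 0}" by (auto simp: VI_def)
  have "a (\<lambda>k. 0 * (0::real)) (\<lambda>k. 0) = 0 * a (\<lambda>k. 0) (\<lambda>k. 0)"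
    using P(2)[of "\<lambda>k. 0" "\<lambda>k. 0" 0] z by auto
  moreover have "l (\<lambda>k. 0 * (0::real)) = 0 * l (\<lambda>k. 0)"
    using P(6)[of "\<lambda>k. 0" 0] z by auto
  ultimately have "a (\<lambda>k. 0) (\<lambda>k. 0) = l (\<lambda>k. 0)" by simp
  thus ?case unfolding z by blast
next
  case (insert i J)
  note P = GOK_D[OF insert.prems]
  let ?V = "VI (insert i J)"
  define e :: "_ \<Rightarrow> real" where "e = (\<lambda>k. if k = i then 1 else 0)"
  have sub: "VI J \<subseteq> ?V" by (auto simp: VI_def)
  have eV: "e \<in> ?V" by (auto simp: VI_def e_def)
  have addV: "\<And>x y. x \<in> VI J \<Longrightarrow> y \<in> VI J \<Longrightarrow> (\<lambda>k. x k + y k) \<in> VI J" by (auto simp: VI_def)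
  have smV: "\<And>c x. x \<in> VI J \<Longrightarrow> (\<lambda>k. c * x k) \<in> VI J" by (auto simp: VI_def)
  have ne: "e \<noteq> (\<lambda>k. 0)" by (metis e_def one_neq_zero)
  have ee: "a e e > 0" using P(4)[OF eV ne] .
  define a' where "a' = (\<lambda>x y. a x y - a x e * a e y / a e e)"
  define l' where "l' = (\<lambda>y. l y - l e * a e y / a e e)"
  have "\<exists>p\<in>VI J. \<forall>w\<in>VI J. a' p w = l' w"
  proof (rule insert.IH, unfold GOK_def, intro conjI allI impI)
    fix x y z assume xyz: "x \<in> VI J" "y \<in> VI J" "z \<in> VI J"
    hence V: "x \<in> ?V" "y \<in> ?V" "z \<in> ?V" "(\<lambda>k. x k + y k) \<in> ?V" using sub addV by auto
    show "a' (\<lambda>k. x k + y k) z = a' x z + a' y z"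
      unfolding a'_def using ee P(1)[OF V(1,2,3)] P(1)[OF V(1,2) eV]
      by (simp add: field_simps)
  next
    fix c x z assume xz: "x \<in> VI J" "z \<in> VI J"
    hence V: "x \<in> ?V" "z \<in> ?V" using sub by auto
    show "a' (\<lambda>k. c * x k) z = c * a' x z"
      unfolding a'_def using ee P(2)[OF V] P(2)[OF V(1) eV, of c]
      by (simp add: field_simps)
  next
    fix x y assume xy: "x \<in> VI J" "y \<in> VI J"
    hence V: "x \<in> ?V" "y \<in> ?V" using sub by auto
    show "a' x y = a' y x"
      unfolding a'_def using ee P(3)[OF V] P(3)[OF V(1) eV] P(3)[OF V(2) eV]
      by (simp add: field_simps)
  next
    fix x assume x: "x \<in> VI J" "x \<noteq> (\<lambda>k. 0)"
    hence xV: "x \<in> ?V" using sub by auto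
    define s where "s = a x e / a e e"
    define z where "z = (\<lambda>k. x k + (- s) * e k)"
    have seV: "(\<lambda>k. (- s) * e k) \<in> ?V" using eV by (auto simp: VI_def)
    have zV: "z \<in> ?V" using xV seV by (auto simp: VI_def z_def)
    have xi: "x i = 0" using x(1) insert.hyps(2) by (auto simp: VI_def)
    have znz: "z \<noteq> (\<lambda>k. 0)"
    proof (cases "s = 0")
      case True thus ?thesis using x(2) by (simp add: z_def)
    next
      case False
      hence "z i \<noteq> 0" by (simp add: z_def e_def xi)
      thus ?thesis by auto
    qed
    have "a z z > 0" using P(4)[OF zV znz] .
    also have "a z z = a x z + a (\<lambda>k. (- s) * e k) z"
      unfolding z_def using P(1)[OF xV seV zV[unfolded z_def]] by simp
    also have "a (\<lambda>k. (- s) * e k) z = (- s) * a e z" using P(2)[OF eV zV] .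
    also have "a x z = a z x" using P(3)[OF xV zV] .
    also have "a e z = a z e" using P(3)[OF eV zV] .
    also have "a z x = a x x + a (\<lambda>k. (- s) * e k) x"
      unfolding z_def using P(1)[OF xV seV xV] by simp
    also have "a (\<lambda>k. (- s) * e k) x = (- s) * a e x" using P(2)[OF eV xV] .
    also have "a z e = a x e + a (\<lambda>k. (- s) * e k) e"
      unfolding z_def using P(1)[OF xV seV eV] by simp
    also have "a (\<lambda>k. (- s) * e k) e = (- s) * a e e" using P(2)[OF eV eV] .
    also have "a e x = a x e" using P(3)[OF eV xV] .
    finally have "0 < a x x + - s * a x e + - s * (a x e + - s * a e e)" .
    moreover have "a x x + - s * a x e + - s * (a x e + - s * a e e) = a' x x"
      unfolding a'_def s_def using ee P(3)[OF eV xV] by (simp add: field_simps power2_eq_square)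
    ultimately show "a' x x > 0" by simp
  next
    fix x y assume xy: "x \<in> VI J" "y \<in> VI J"
    hence V: "x \<in> ?V" "y \<in> ?V" using sub by auto
    have sV: "(\<lambda>k. x k + y k) \<in> ?V" using addV[OF xy] sub by auto
    show "l' (\<lambda>k. x k + y k) = l' x + l' y"
      unfolding l'_def using ee P(5)[OF V] P(3)[OF V(1) eV] P(3)[OF V(2) eV]
        P(1)[OF V eV] P(3)[OF sV eV]
      by (auto simp add: field_simps)
  next
    fix c x assume x: "x \<in> VI J"
    hence V: "x \<in> ?V" using sub by auto
    have cV: "(\<lambda>k. c * x k) \<in> ?V" using smV[OF x] sub by auto
    show "l' (\<lambda>k. c * x k) = c * l' x"
      unfolding l'_def using ee P(6)[OF V] P(3)[OF V eV] P(2)[OF V eV, of c] P(3)[OF cV eV]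
      by (auto simp add: field_simps)
  qed
  then obtain p' where p': "p' \<in> VI J" "\<And>w. w \<in> VI J \<Longrightarrow> a' p' w = l' w" by blast
  have p'V: "p' \<in> ?V" using p' sub by auto
  define t where "t = (l e - a p' e) / a e e"
  define p where "p = (\<lambda>k. p' k + t * e k)"
  have teV: "(\<lambda>k. t * e k) \<in> ?V" using eV by (auto simp: VI_def)
  have pV: "p \<in> ?V" using p'V teV by (auto simp: VI_def p_def)
  have pw0: "a p w = a p' w + t * a e w" if "w \<in> ?V" for w
    unfolding p_def using P(1)[OF p'V teV that] P(2)[OF eV that] by simp
  have pe: "a p e = l e" using pw0[OF eV] ee by (simp add: t_def field_simps)
  have pJ: "a p w = l w" if w: "w \<in> VI J" for w
  proof -
    have wV: "w \<in> ?V" using w sub by auto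
    have "a p w = a' p' w + a p' e * a e w / a e e + t * a e w"
      using pw0[OF wV] by (simp add: a'_def)
    also have "\<dots> = l' w + (a p' e + t * a e e) * a e w / a e e"
      using p'(2)[OF w] ee by (simp add: field_simps)
    also have "\<dots> = l w" using ee by (simp add: l'_def t_def field_simps)
    finally show ?thesis .
  qed
  have "\<forall>w\<in>?V. a p w = l w"
  proof
    fix w assume wV: "w \<in> ?V"
    define wJ where "wJ = (\<lambda>k. if k = i then 0 else w k)"
    have wJV: "wJ \<in> VI J" using wV by (auto simp: VI_def wJ_def)
    hence wJV': "wJ \<in> ?V" using sub by auto
    have wie: "(\<lambda>k. w i * e k) \<in> ?V" using eV by (auto simp: VI_def)
    have wdec: "w = (\<lambda>k. wJ k + w i * e k)" by (auto simp: wJ_def e_def)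
    have "a p w = a w p" using P(3)[OF pV wV] .
    also have "\<dots> = a wJ p + a (\<lambda>k. w i * e k) p"
      using P(1)[OF wJV' wie pV] wdec by metis
    also have "\<dots> = a p wJ + w i * a p e"
      using P(2)[OF eV pV] P(3)[OF pV wJV'] P(3)[OF pV eV] by simp
    also have "\<dots> = l wJ + w i * l e" using pJ[OF wJV] pe by simp
    also have "\<dots> = l w"
      using P(5)[OF wJV' wie] P(6)[OF eV] wdec by metis
    finally show "a p w = l w" .
  qed
  thus ?case using pV by blast
qed

lemma G_unique:
  assumes "GOK I a l" "p1 \<in> VI I" "p2 \<in> VI I"
    "\<forall>w\<in>VI I. a p1 w = l w" "\<forall>w\<in>VI I. a p2 w = l w"
  shows "p1 = p2"
proof (rule ccontr)
  assume ne: "p1 \<noteq> p2"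
  note P = GOK_D[OF assms(1)]
  define x where "x = (\<lambda>k. p1 k + (-1) * p2 k)"
  have mV: "(\<lambda>k. (-1) * p2 k) \<in> VI I" using assms(3) by (auto simp: VI_def)
  have xV: "x \<in> VI I" using assms(2,3) by (auto simp: VI_def x_def)
  have "x \<noteq> (\<lambda>k. 0)"
  proof
    assume h: "x = (\<lambda>k. 0)"
    have "p1 k = p2 k" for k using fun_cong[OF h, of k] by (simp add: x_def)
    thus False using ne by auto
  qed
  hence "a x x > 0" using P(4)[OF xV] by simp
  moreover have "a x x = a p1 x + (-1) * a p2 x"
    unfolding x_def using P(1)[OF assms(2) mV xV[unfolded x_def]] P(2)[OF assms(3) xV[unfolded x_def], of "-1"] by simp
  ultimately show False using assms(4,5) xV by simp
qed

lemma mesh_finite: "mesh_ok S \<Longrightarrow> finite (elems S)"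
  by (simp add: mesh_ok_def)

lemma elem_lmeas:
  assumes "mesh_ok S" "\<tau> \<in> elems S"
  shows "\<tau> \<in> sets lebesgue" "emeasure lebesgue \<tau> < \<infinity>"
proof -
  have "compact \<tau>" using assms by (simp add: mesh_ok_def)
  hence "\<tau> \<in> lmeasurable" by (rule lmeasurable_compact)
  thus "\<tau> \<in> sets lebesgue" "emeasure lebesgue \<tau> < \<infinity>" by (auto simp: fmeasurable_def)
qed

lemma AE_disj:
  assumes "mesh_ok S"
  shows "AE x in lebesgue. \<forall>\<sigma>\<in>elems S. \<forall>\<tau>\<in>elems S. \<sigma> \<noteq> \<tau> \<longrightarrow> x \<notin> \<sigma> \<inter> \<tau>"
proof -
  have fin: "finite (elems S)" using assms by (simp add: mesh_ok_def)
  have nul: "\<sigma> \<inter> \<tau> \<in> null_sets lebesgue" if "\<sigma> \<in> elems S" "\<tau> \<in> elems S" "\<sigma> \<noteq> \<tau>" for \<sigma> \<tau>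
    using assms that by (simp add: mesh_ok_def)
  show ?thesis
    apply (rule AE_finite_allI[OF fin])
    apply (rule AE_finite_allI[OF fin])
    subgoal for \<sigma> \<tau>
      apply (cases "\<sigma> = \<tau>")
       apply simp
      using AE_not_in[OF nul[of \<sigma> \<tau>]] by auto
    done
qed

lemma pw_ind:
  assumes D: "\<forall>\<sigma>\<in>E. \<forall>\<tau>\<in>E. \<sigma> \<noteq> \<tau> \<longrightarrow> x \<notin> \<sigma> \<inter> \<tau>" and fin: "finite E" and T: "T \<subseteq> E"
  shows "indicator (\<Union>T) x * (\<Sum>\<tau>\<in>E. c \<tau> * indicator \<tau> x) = (\<Sum>\<tau>\<in>T. c \<tau> * (indicator \<tau> x :: real))"
proof (cases "\<exists>\<sigma>\<in>E. x \<in> \<sigma>")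
  case False
  hence "\<And>\<tau>. \<tau> \<in> E \<Longrightarrow> indicator \<tau> x = (0::real)" by auto
  moreover have "\<And>\<tau>. \<tau> \<in> T \<Longrightarrow> indicator \<tau> x = (0::real)" using False T by auto
  ultimately show ?thesis by simp
next
  case True
  then obtain \<sigma> where s: "\<sigma> \<in> E" "x \<in> \<sigma>" by blast
  have ind: "\<And>\<tau>. \<tau> \<in> E \<Longrightarrow> indicator \<tau> x = (if \<sigma> = \<tau> then 1 else (0::real))"
    using D s by (auto simp: indicator_def)
  have indT: "\<And>\<tau>. \<tau> \<in> T \<Longrightarrow> indicator \<tau> x = (if \<sigma> = \<tau> then 1 else (0::real))"
    using ind T by blast
  have U: "indicator (\<Union>T) x = (if \<sigma> \<in> T then 1 else (0::real))"
    using D s T by (auto simp: indicator_def)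
  have "(\<Sum>\<tau>\<in>E. c \<tau> * indicator \<tau> x) = (\<Sum>\<tau>\<in>E. if \<sigma> = \<tau> then c \<tau> else 0)"
    by (rule sum.cong) (auto simp: ind)
  also have "\<dots> = c \<sigma>" using s fin by simp
  finally have 1: "(\<Sum>\<tau>\<in>E. c \<tau> * indicator \<tau> x) = c \<sigma>" .
  have "(\<Sum>\<tau>\<in>T. c \<tau> * indicator \<tau> x) = (\<Sum>\<tau>\<in>T. if \<sigma> = \<tau> then c \<tau> else 0)"
    by (rule sum.cong) (auto simp: indT)
  also have "\<dots> = (if \<sigma> \<in> T then c \<sigma> else 0)" proof -
    have "finite T" using fin T finite_subset by blast
    thus ?thesis by (simp add: sum.delta)
  qed
  finally show ?thesis using 1 U by simp
qed

lemma pw_prod: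
  assumes D: "\<forall>\<sigma>\<in>E. \<forall>\<tau>\<in>E. \<sigma> \<noteq> \<tau> \<longrightarrow> x \<notin> \<sigma> \<inter> \<tau>" and fin: "finite E"
  shows "(\<Sum>\<tau>\<in>E. p \<tau> * indicator \<tau> x) * (\<Sum>\<tau>\<in>E. u \<tau> * indicator \<tau> x)
       = (\<Sum>\<tau>\<in>E. (p \<tau> * u \<tau>) * (indicator \<tau> x :: real))"
proof (cases "\<exists>\<sigma>\<in>E. x \<in> \<sigma>")
  case False
  hence "\<And>\<tau>. \<tau> \<in> E \<Longrightarrow> indicator \<tau> x = (0::real)" by auto
  thus ?thesis by simp
next
  case True
  then obtain \<sigma> where s: "\<sigma> \<in> E" "x \<in> \<sigma>" by blast
  have ind: "\<And>\<tau>. \<tau> \<in> E \<Longrightarrow> indicator \<tau> x = (if \<sigma> = \<tau> then 1 else (0::real))"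
    using D s by (auto simp: indicator_def)
  have e: "(\<Sum>\<tau>\<in>E. c \<tau> * indicator \<tau> x) = c \<sigma>" for c :: "_ \<Rightarrow> real"
  proof -
    have "(\<Sum>\<tau>\<in>E. c \<tau> * indicator \<tau> x) = (\<Sum>\<tau>\<in>E. if \<sigma> = \<tau> then c \<tau> else 0)"
      by (rule sum.cong) (auto simp: ind)
    also have "\<dots> = c \<sigma>" using s fin by simp
    finally show ?thesis .
  qed
  show ?thesis by (simp only: e)
qed

lemma pc_meas:
  assumes "mesh_ok S"
  shows "pc S u \<in> borel_measurable lebesgue"
  unfolding pc_def
  by (intro borel_measurable_sum borel_measurable_times borel_measurable_const
      borel_measurable_indicator elem_lmeas[OF assms]) 

lemma set_int_elems:
  assumes M: "mesh_ok S" and T: "T \<subseteq> elems S"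
    and fm: "f \<in> borel_measurable lebesgue"
    and AEf: "AE x in lebesgue. f x = (\<Sum>\<tau>\<in>elems S. c \<tau> * indicator \<tau> x)"
  shows "set_lebesgue_integral lebesgue (\<Union>T) f = (\<Sum>\<tau>\<in>T. c \<tau> * measure lebesgue \<tau>)"
proof -
  have fin: "finite (elems S)" using M by (simp add: mesh_ok_def)
  have finT: "finite T" using fin T finite_subset by auto
  have Tm: "\<Union>T \<in> sets lebesgue" using T finT elem_lmeas[OF M] by auto
  have "set_lebesgue_integral lebesgue (\<Union>T) f = integral\<^sup>L lebesgue (\<lambda>x. \<Sum>\<tau>\<in>T. c \<tau> * indicator \<tau> x)"
    unfolding set_lebesgue_integral_def
  proof (rule integral_cong_AE)
    show "(\<lambda>x. indicator (\<Union> T) x *\<^sub>R f x) \<in> borel_measurable lebesgue"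
      using fm Tm by (intro borel_measurable_scaleR borel_measurable_indicator) auto
    show "(\<lambda>x. \<Sum>\<tau>\<in>T. c \<tau> * indicator \<tau> x) \<in> borel_measurable lebesgue"
      using T by (intro borel_measurable_sum borel_measurable_times borel_measurable_const
          borel_measurable_indicator elem_lmeas[OF M]) auto
    show "AE x in lebesgue. indicator (\<Union> T) x *\<^sub>R f x = (\<Sum>\<tau>\<in>T. c \<tau> * indicator \<tau> x)"
      using AEf AE_disj[OF M]
    proof eventually_elim
      case (elim x)
      thus ?case using pw_ind[OF elim(2) fin T, of c] by simp
    qed
  qed
  also have "\<dots> = (\<Sum>\<tau>\<in>T. c \<tau> * measure lebesgue \<tau>)"
    using T elem_lmeas[OF M]
    by (subst Bochner_Integration.integral_sum) auto
  finally show ?thesis .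
qed

lemma AE_pcpc:
  assumes M: "mesh_ok S"
  shows "AE x in lebesgue. pc S p x * pc S u x = (\<Sum>\<tau>\<in>elems S. (p \<tau> * u \<tau>) * indicator \<tau> x)"
  using AE_disj[OF M]
proof eventually_elim
  case (elim x) thus ?case unfolding pc_def using pw_prod[OF elim mesh_finite[OF M]] by simp
qed

lemma int_pcpc:
  assumes M: "mesh_ok S" and T: "T \<subseteq> elems S"
  shows "set_lebesgue_integral lebesgue (\<Union>T) (\<lambda>x. pc S p x * pc S u x) = (\<Sum>\<tau>\<in>T. p \<tau> * u \<tau> * measure lebesgue \<tau>)"
  using set_int_elems[OF M T _ AE_pcpc[OF M]] pc_meas[OF M] by simp

lemma int_pc:
  assumes M: "mesh_ok S" and T: "T \<subseteq> elems S"
  shows "set_lebesgue_integral lebesgue (\<Union>T) (pc S u) = (\<Sum>\<tau>\<in>T. u \<tau> * measure lebesgue \<tau>)"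
  using set_int_elems[OF M T pc_meas[OF M], of u] unfolding pc_def by simp

abbreviation "mm \<tau> \<equiv> measure lebesgue \<tau>"

lemma sok_D:
  assumes "setting_ok S"
  shows "mesh_ok S" "rooted_forest S" "coupling_ok S"
  using assms by (auto simp: setting_ok_def)

lemma Msub_sub:
  assumes "setting_ok S" "i \<in> tnodes S"
  shows "Msub S i \<subseteq> elems S"
  using assms by (auto simp: setting_ok_def coupling_ok_def)

lemma lumped_expl:
  assumes "setting_ok S"
  shows "lumped S (qD, qS, qN) (vD, vS, vN) =
     (\<Sum>\<tau> \<in> elems S. \<Sum>f \<in> fcs S \<tau>.
         (fdist S \<tau> f / (kappa S \<tau> * farea S f)) * Qf S \<tau> f qD * Qf S \<tau> f vD)
     + (\<Sum>i \<in> tnodes S. \<Sum>\<tau>\<in>Msub S i. qS i \<tau> * vS i \<tau> * mm \<tau>)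
     + (\<Sum>e \<in> edges S. qN e * vN e / kN S e)"
proof -
  have "set_lebesgue_integral lebesgue (B S i) (\<lambda>x. pc S (qS i) x * pc S (vS i) x)
        = (\<Sum>\<tau>\<in>Msub S i. qS i \<tau> * vS i \<tau> * mm \<tau>)" if "i \<in> tnodes S" for i
    unfolding B_def using int_pcpc[OF sok_D(1)[OF assms] Msub_sub[OF assms that]] .
  thus ?thesis unfolding lumped_def by (simp cong: sum.cong)
qed

lemma divB_expl:
  assumes "setting_ok S"
  shows "divB S (qD, qS, qN) =
     (\<lambda>\<tau>. divRT S qD \<tau> - (\<Sum>i \<in> tnodes S. kS S i \<tau> * qS i \<tau>),
      \<lambda>i. if i \<in> tnodes S
          then (\<Sum>\<tau>\<in>Msub S i. kS S i \<tau> * qS i \<tau> * mm \<tau>) - flx S qN (par S i) i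
          else - (\<Sum>j \<in> nbrs S i. flx S qN j i))"
proof -
  have "set_lebesgue_integral lebesgue (B S i) (\<lambda>x. pc S (kS S i) x * pc S (qS i) x)
        = (\<Sum>\<tau>\<in>Msub S i. kS S i \<tau> * qS i \<tau> * mm \<tau>)" if "i \<in> tnodes S" for i
    unfolding B_def using int_pcpc[OF sok_D(1)[OF assms] Msub_sub[OF assms that]] .
  thus ?thesis unfolding divB_def by (auto intro!: ext)
qed

lemma ipB_emb:
  assumes "setting_ok S"
  shows "ipB S (emb S p) (emb S u) = (\<Sum>\<tau>\<in>elems S. fst p \<tau> * fst u \<tau> * mm \<tau>)
           + (\<Sum>i\<in>nodes S - droots S. snd p i * snd u i)"
  unfolding ipB_def emb_def Omega_def using int_pcpc[OF sok_D(1)[OF assms], of "elems S"] by simp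

lemma kS_pos:
  assumes "setting_ok S" "i \<in> tnodes S"
  shows "\<exists>\<tau>\<in>Msub S i. kS S i \<tau> > 0"
proof (rule ccontr)
  assume n: "\<not> ?thesis"
  have nn: "\<And>\<tau>. 0 \<le> kS S i \<tau>" using assms by (auto simp: setting_ok_def coupling_ok_def)
  have z: "\<And>\<tau>. \<tau> \<in> Msub S i \<Longrightarrow> kS S i \<tau> = 0"
    using n nn by (metis order.not_eq_order_implies_strict)
  obtain c where c: "c > 0" "set_lebesgue_integral lebesgue (B S i) (pc S (kS S i)) \<ge> c"
    using assms by (auto simp: setting_ok_def coupling_ok_def)
  have "set_lebesgue_integral lebesgue (B S i) (pc S (kS S i)) = (\<Sum>\<tau>\<in>Msub S i. kS S i \<tau> * mm \<tau>)"
    unfolding B_def using int_pc[OF sok_D(1)[OF assms(1)] Msub_sub[OF assms]] .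
  also have "\<dots> = 0" using z by simp
  finally show False using c by simp
qed

lemma L2_int:
  assumes M: "mesh_ok S" and r: "L2Omega S rD" and t: "\<tau> \<in> elems S"
  shows "set_integrable lebesgue (Omega S) (\<lambda>x. rD x * indicator \<tau> x)"
  unfolding set_integrable_def
proof (rule Bochner_Integration.integrable_bound)
  have Om: "Omega S \<in> sets lebesgue" unfolding Omega_def using M elem_lmeas[OF M] mesh_finite[OF M] by auto
  show "integrable lebesgue (\<lambda>x. indicator (Omega S) x *\<^sub>R (rD x)^2 + indicator \<tau> x)"
    using r elem_lmeas[OF M t] by (intro Bochner_Integration.integrable_add) (auto simp: L2Omega_def set_integrable_def)
  show "(\<lambda>x. indicator (Omega S) x *\<^sub>R (rD x * indicator \<tau> x)) \<in> borel_measurable lebesgue"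
    using r Om elem_lmeas[OF M t] by (intro borel_measurable_scaleR borel_measurable_times borel_measurable_indicator) (auto simp: L2Omega_def)
  have sub: "\<tau> \<subseteq> Omega S" using t by (auto simp: Omega_def)
  show "AE x in lebesgue. norm (indicator (Omega S) x *\<^sub>R (rD x * indicator \<tau> x))
          \<le> norm (indicator (Omega S) x *\<^sub>R (rD x)^2 + (indicator \<tau> x :: real))"
  proof (rule AE_I2)
    fix x
    have a: "\<bar>y\<bar> \<le> y^2 + 1" for y :: real
    proof (cases "\<bar>y\<bar> \<le> 1")
      case True thus ?thesis using zero_le_power2[of y] by linarith
    next
      case False
      hence "\<bar>y\<bar> \<le> \<bar>y\<bar> * \<bar>y\<bar>" using mult_right_mono[of 1 "\<bar>y\<bar>" "\<bar>y\<bar>"] by simp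
      also have "\<dots> = y^2" by (simp add: power2_eq_square abs_mult_self_eq)
      finally show ?thesis by simp
    qed
    show "norm (indicator (Omega S) x *\<^sub>R (rD x * indicator \<tau> x))
          \<le> norm (indicator (Omega S) x *\<^sub>R (rD x)^2 + (indicator \<tau> x :: real))"
      using sub a[of "rD x"] by (cases "x \<in> \<tau>"; cases "x \<in> Omega S") auto
  qed
qed

lemma ipB_r:
  assumes S: "setting_ok S" and r: "L2Omega S rD"
  shows "ipB S (rD, rN) (emb S w) =
     (\<Sum>\<tau>\<in>elems S. fst w \<tau> * set_lebesgue_integral lebesgue (Omega S) (\<lambda>x. rD x * indicator \<tau> x))
     + (\<Sum>i\<in>nodes S - droots S. rN i * snd w i)"
proof -
  note M = sok_D(1)[OF S]
  have "set_lebesgue_integral lebesgue (Omega S) (\<lambda>x. rD x * pc S (fst w) x)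
     = integral\<^sup>L lebesgue (\<lambda>x. \<Sum>\<tau>\<in>elems S. fst w \<tau> * (indicator (Omega S) x *\<^sub>R (rD x * indicator \<tau> x)))"
    unfolding set_lebesgue_integral_def pc_def
    by (rule arg_cong[where f="integral\<^sup>L lebesgue"]) (auto simp: sum_distrib_left algebra_simps intro!: ext sum.cong)
  also have "\<dots> = (\<Sum>\<tau>\<in>elems S. fst w \<tau> * set_lebesgue_integral lebesgue (Omega S) (\<lambda>x. rD x * indicator \<tau> x))"
    using L2_int[OF M r] unfolding set_lebesgue_integral_def set_integrable_def
    by (subst Bochner_Integration.integral_sum) auto
  finally show ?thesis unfolding ipB_def emb_def by simp
qed

abbreviation "NR S \<equiv> nodes S - roots S"

lemma rf_D:
  assumes "rooted_forest S"
  shows "finite (nodes S)" "roots S \<subseteq> nodes S" "\<And>j. j \<in> NR S \<Longrightarrow> par S j \<in> nodes S"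
    "\<And>j. j \<in> nodes S \<Longrightarrow> \<exists>k. (par S ^^ k) j \<in> roots S"
    "\<And>r. r \<in> roots S \<Longrightarrow> card {j \<in> NR S. par S j = r} = 1"
    "droots S \<subseteq> roots S" "droots S \<noteq> {}"
  using assms unfolding rooted_forest_def by blast+

lemma closed_nr:
  assumes "\<And>x. x \<in> A \<Longrightarrow> par S x \<in> A" "j \<in> A"
  shows "(par S ^^ k) j \<in> A"
  by (induction k) (use assms in auto)

lemma no_trap:
  assumes R: "rooted_forest S" and A: "A \<subseteq> NR S" "\<And>x. x \<in> A \<Longrightarrow> par S x \<in> A" and j: "j \<in> A"
  shows False
proof -
  obtain k where "(par S ^^ k) j \<in> roots S" using rf_D(4)[OF R] j A by blast
  moreover have "(par S ^^ k) j \<in> A" using closed_nr[of A S j k] A j by blast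
  ultimately show False using A by blast
qed

lemma par_neq:
  assumes R: "rooted_forest S" and j: "j \<in> NR S"
  shows "par S j \<noteq> j"
proof
  assume "par S j = j"
  thus False using no_trap[OF R, of "{j}" j] j by auto
qed

lemma par_par_neq:
  assumes R: "rooted_forest S" and j: "j \<in> NR S" "par S j \<in> NR S"
  shows "par S (par S j) \<noteq> j"
proof
  assume h: "par S (par S j) = j"
  show False using no_trap[OF R, of "{j, par S j}" j] j h by auto
qed

lemma nbrs_finite:
  assumes R: "rooted_forest S"
  shows "finite (nbrs S i)"
  using rf_D(1)[OF R] by (auto simp: nbrs_def)

definition dep :: "('a, 'f, 'n) setting \<Rightarrow> 'n \<Rightarrow> nat" where
  "dep S j = (LEAST K. (par S ^^ K) j \<in> roots S)"

lemma dep_suc: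
  assumes R: "rooted_forest S" and t: "t \<in> NR S"
  shows "dep S t = Suc (dep S (par S t))"
proof -
  have pn: "par S t \<in> nodes S" using rf_D(3)[OF R t] .
  obtain K where K: "(par S ^^ K) (par S t) \<in> roots S" using rf_D(4)[OF R pn] by blast
  have d1: "(par S ^^ dep S (par S t)) (par S t) \<in> roots S"
    unfolding dep_def using K by (rule LeastI)
  have "(par S ^^ Suc (dep S (par S t))) t \<in> roots S"
    using d1 by (simp add: funpow_Suc_right del: funpow.simps)
  hence le: "dep S t \<le> Suc (dep S (par S t))" unfolding dep_def by (rule Least_le)
  have dt: "(par S ^^ dep S t) t \<in> roots S"
    unfolding dep_def
  proof (rule LeastI[of _ "Suc K"])
    show "(par S ^^ Suc K) t \<in> roots S" using K by (simp add: funpow_Suc_right del: funpow.simps)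
  qed
  have "dep S t \<noteq> 0"
  proof
    assume "dep S t = 0"
    thus False using dt t by simp
  qed
  then obtain m where m: "dep S t = Suc m" by (cases "dep S t") auto
  have "(par S ^^ m) (par S t) \<in> roots S" using dt m by (simp add: funpow_Suc_right del: funpow.simps)
  hence "dep S (par S t) \<le> m" unfolding dep_def by (rule Least_le)
  thus ?thesis using le m by simp
qed

lemma descent:
  assumes R: "rooted_forest S" and j0: "j0 \<in> NR S"
  shows "\<exists>t\<in>tnodes S. \<exists>k. (par S ^^ k) t = j0 \<and> (\<forall>i\<le>k. (par S ^^ i) t \<in> NR S)"
proof -
  define Y where "Y = {t \<in> NR S. \<exists>k. (par S ^^ k) t = j0 \<and> (\<forall>i\<le>k. (par S ^^ i) t \<in> NR S)}"
  have finY: "finite Y" using rf_D(1)[OF R] by (auto simp: Y_def)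
  have j0Y: "j0 \<in> Y" using j0 by (auto simp: Y_def intro!: exI[of _ 0])
  define m where "m = Max (dep S ` Y)"
  have "m \<in> dep S ` Y" unfolding m_def using finY j0Y by (intro Max_in) auto
  then obtain t where tY: "t \<in> Y" and tm: "dep S t = m" by auto
  have mx: "\<And>y. y \<in> Y \<Longrightarrow> dep S y \<le> dep S t" using finY tm unfolding m_def by auto
  obtain k where k: "(par S ^^ k) t = j0" "\<forall>i\<le>k. (par S ^^ i) t \<in> NR S" using tY by (auto simp: Y_def)
  have tNR: "t \<in> NR S" using tY by (auto simp: Y_def)
  have nochild: "{j \<in> NR S. par S j = t} = {}"
  proof (rule ccontr)
    assume "{j \<in> NR S. par S j = t} \<noteq> {}"
    then obtain c where c: "c \<in> NR S" "par S c = t" by blast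
    have "(par S ^^ Suc k) c = j0" using k c by (simp add: funpow_Suc_right del: funpow.simps)
    moreover have "\<forall>i\<le>Suc k. (par S ^^ i) c \<in> NR S"
    proof (intro allI impI)
      fix i assume "i \<le> Suc k"
      thus "(par S ^^ i) c \<in> NR S"
        using c k by (cases i) (auto simp: funpow_Suc_right simp del: funpow.simps)
    qed
    ultimately have "c \<in> Y" using c unfolding Y_def by blast
    hence "dep S c \<le> dep S t" by (rule mx)
    moreover have "dep S c = Suc (dep S t)" using dep_suc[OF R c(1)] c by simp
    ultimately show False by simp
  qed
  have "nbrs S t = {par S t}" using nochild tNR by (auto simp: nbrs_def)
  hence "t \<in> tnodes S" using tNR by (auto simp: tnodes_def)
  thus ?thesis using k by blast
qed

lemma prop_chain:
  assumes eq: "\<And>j. j \<in> NR S \<Longrightarrow> g (par S j) = g j"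
    and ch: "\<forall>i\<le>k. (par S ^^ i) t \<in> NR S"
  shows "g ((par S ^^ k) t) = g t"
  using ch
proof (induction k)
  case 0 thus ?case by simp
next
  case (Suc k)
  have "(par S ^^ k) t \<in> NR S" using Suc.prems by simp
  hence "g (par S ((par S ^^ k) t)) = g ((par S ^^ k) t)" by (rule eq)
  thus ?case using Suc by simp
qed

lemma flx_zero[simp]: "flx S (\<lambda>e. 0) j i = 0"
  by (simp add: flx_def)

lemma mesh_w1: "mesh_ok S \<Longrightarrow> finite (elems S)"
  unfolding mesh_ok_def by (elim conjE)
lemma mesh_w2: "mesh_ok S \<Longrightarrow> \<forall>\<tau> \<in> elems S. compact \<tau> \<and> measure lebesgue \<tau> > 0 \<and> kappa S \<tau> > 0"
  unfolding mesh_ok_def by (elim conjE)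
lemma mesh_w3: "mesh_ok S \<Longrightarrow> finite (mfaces S)"
  unfolding mesh_ok_def by (elim conjE)
lemma mesh_w4: "mesh_ok S \<Longrightarrow> \<forall>\<tau> \<in> elems S. fcs S \<tau> \<subseteq> mfaces S"
  unfolding mesh_ok_def by (elim conjE)
lemma mesh_w5: "mesh_ok S \<Longrightarrow> \<forall>\<tau> \<in> elems S. \<forall>f \<in> fcs S \<tau>. osgn S \<tau> f \<in> {-1, 1} \<and> fdist S \<tau> f > 0"
  unfolding mesh_ok_def by (elim conjE)
lemma mesh_w6: "mesh_ok S \<Longrightarrow> \<forall>f \<in> mfaces S. farea S f > 0 \<and> 1 \<le> card (cells S f) \<and> card (cells S f) \<le> 2"
  unfolding mesh_ok_def by (elim conjE)
lemma mesh_w7: "mesh_ok S \<Longrightarrow> \<forall>f \<in> mfaces S. \<forall>\<tau>1 \<in> cells S f. \<forall>\<tau>2 \<in> cells S f.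
         \<tau>1 \<noteq> \<tau>2 \<longrightarrow> osgn S \<tau>1 f = - osgn S \<tau>2 f"
  unfolding mesh_ok_def by (elim conjE)

lemma mesh_D0:
  assumes "mesh_ok S"
  shows "finite (elems S)" "\<And>\<tau>. \<tau> \<in> elems S \<Longrightarrow> mm \<tau> > 0"
    "\<And>\<tau>. \<tau> \<in> elems S \<Longrightarrow> fcs S \<tau> \<subseteq> mfaces S" "finite (mfaces S)"
    "\<And>\<tau> f. \<tau> \<in> elems S \<Longrightarrow> f \<in> fcs S \<tau> \<Longrightarrow> osgn S \<tau> f \<in> {-1, 1} \<and> fdist S \<tau> f > 0"
    "\<And>f. f \<in> mfaces S \<Longrightarrow> farea S f > 0 \<and> 1 \<le> card (cells S f) \<and> card (cells S f) \<le> 2"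
    "\<And>f \<tau>1 \<tau>2. f \<in> mfaces S \<Longrightarrow> \<tau>1 \<in> cells S f \<Longrightarrow> \<tau>2 \<in> cells S f \<Longrightarrow> \<tau>1 \<noteq> \<tau>2 \<Longrightarrow> osgn S \<tau>1 f = - osgn S \<tau>2 f"
    "\<And>\<tau>. \<tau> \<in> elems S \<Longrightarrow> kappa S \<tau> > 0"
  subgoal using mesh_w1[OF assms] .
  subgoal for \<tau> using mesh_w2[OF assms] by blast
  subgoal for \<tau> using mesh_w4[OF assms] by blast
  subgoal using mesh_w3[OF assms] .
  subgoal for \<tau> f using mesh_w5[OF assms] by blast
  subgoal for f using mesh_w6[OF assms] by blast
  subgoal for f \<tau>1 \<tau>2 using mesh_w7[OF assms] by blast
  subgoal for \<tau> using mesh_w2[OF assms] by blast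
  done

lemma mesh_conn:
  assumes "mesh_ok S" "\<tau>1 \<in> elems S" "\<tau>2 \<in> elems S"
  shows "(\<tau>1, \<tau>2) \<in> {(a, b). a \<in> elems S \<and> b \<in> elems S \<and> fcs S a \<inter> fcs S b \<noteq> {}}\<^sup>*"
proof -
  have "\<forall>\<tau>1 \<in> elems S. \<forall>\<tau>2 \<in> elems S.
         (\<tau>1, \<tau>2) \<in> {(a, b). a \<in> elems S \<and> b \<in> elems S \<and> fcs S a \<inter> fcs S b \<noteq> {}}\<^sup>*"
    using assms(1) unfolding mesh_ok_def by (elim conjE)
  thus ?thesis using assms(2,3) by blast
qed

lemmas mesh_D = mesh_D0 mesh_conn

lemma fcs_finite: "mesh_ok S \<Longrightarrow> \<tau> \<in> elems S \<Longrightarrow> finite (fcs S \<tau>)"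
  using mesh_D(3,4) finite_subset by blast

lemma stepA:
  assumes S: "setting_ok S" and p: "p \<in> Lh S"
    and h: "\<forall>v\<in>Hh0 S. ipB S (emb S p) (emb S (divB S v)) = 0"
    and t: "\<tau>1 \<in> elems S" "\<tau>2 \<in> elems S" "\<tau>1 \<noteq> \<tau>2" "f \<in> fcs S \<tau>1" "f \<in> fcs S \<tau>2"
  shows "fst p \<tau>1 = fst p \<tau>2"
proof -
  note M = sok_D(1)[OF S]
  have fm: "f \<in> mfaces S" using mesh_D(3)[OF M t(1)] t(4) by auto
  have cf: "{\<tau>1, \<tau>2} \<subseteq> cells S f" using t by (auto simp: cells_def)
  have fincf: "finite (cells S f)" using mesh_D(1)[OF M] by (auto simp: cells_def)
  have c2: "card (cells S f) = 2"
  proof -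
    have "card {\<tau>1, \<tau>2} \<le> card (cells S f)" using cf fincf by (simp add: card_mono)
    thus ?thesis using t(3) mesh_D(6)[OF M fm] by auto
  qed
  have cfe: "cells S f = {\<tau>1, \<tau>2}"
    using cf c2 fincf t(3) by (metis card_2_iff card_subset_eq finite.emptyI finite.insertI)
  have nb: "f \<notin> bfaces S" using c2 by (auto simp: bfaces_def)
  define v where "v = ((\<lambda>g. if g = f then 1 else 0) :: 'b \<Rightarrow> real, (\<lambda>i \<tau>. 0) :: 'c \<Rightarrow> 'a set \<Rightarrow> real, (\<lambda>e. 0) :: 'c \<times> 'c \<Rightarrow> real)"
  have vH: "v \<in> Hh0 S" using fm nb by (auto simp: Hh0_def v_def)
  have dv: "divB S v = (\<lambda>\<tau>. divRT S (\<lambda>g. if g = f then 1 else 0) \<tau>, \<lambda>i. 0)"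
    unfolding v_def divB_expl[OF S] by (auto intro!: ext)
  have dr: "divRT S (\<lambda>g. if g = f then 1 else 0) \<tau> * mm \<tau> = (if f \<in> fcs S \<tau> then osgn S \<tau> f else 0)"
    if "\<tau> \<in> elems S" for \<tau>
  proof -
    have "(\<Sum>g\<in>fcs S \<tau>. Qf S \<tau> g (\<lambda>g. if g = f then 1 else 0)) = (\<Sum>g\<in>fcs S \<tau>. if f = g then osgn S \<tau> f else 0)"
      by (rule sum.cong) (auto simp: Qf_def)
    also have "\<dots> = (if f \<in> fcs S \<tau> then osgn S \<tau> f else 0)" using fcs_finite[OF M that] by (simp add: sum.delta)
    finally show ?thesis using mesh_D(2)[OF M that] unfolding divRT_def by simp
  qed
  have "0 = ipB S (emb S p) (emb S (divB S v))" using h vH by simp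
  also have "\<dots> = (\<Sum>\<tau>\<in>elems S. fst p \<tau> * (divRT S (\<lambda>g. if g = f then 1 else 0) \<tau> * mm \<tau>))"
    unfolding ipB_emb[OF S] dv by (simp add: mult.assoc)
  also have "\<dots> = (\<Sum>\<tau>\<in>elems S. if f \<in> fcs S \<tau> then fst p \<tau> * osgn S \<tau> f else 0)"
    by (rule sum.cong) (auto simp: dr)
  also have "\<dots> = (\<Sum>\<tau>\<in>cells S f. fst p \<tau> * osgn S \<tau> f)"
    unfolding cells_def using mesh_D(1)[OF M] by (simp add: sum.inter_filter)
  also have "\<dots> = fst p \<tau>1 * osgn S \<tau>1 f + fst p \<tau>2 * osgn S \<tau>2 f" using cfe t(3) by simp
  also have "\<dots> = osgn S \<tau>1 f * (fst p \<tau>1 - fst p \<tau>2)"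
    using mesh_D(7)[OF M fm, of \<tau>1 \<tau>2] cfe t(3) by (simp add: algebra_simps)
  finally have "osgn S \<tau>1 f * (fst p \<tau>1 - fst p \<tau>2) = 0" by simp
  moreover have "osgn S \<tau>1 f \<noteq> 0" using mesh_D(5)[OF M t(1,4)] by auto
  ultimately show ?thesis by simp
qed

lemma stepB:
  assumes S: "setting_ok S" and p: "p \<in> Lh S"
    and h: "\<forall>v\<in>Hh0 S. ipB S (emb S p) (emb S (divB S v)) = 0"
    and t: "\<tau>0 \<in> elems S" "\<tau> \<in> elems S"
  shows "fst p \<tau> = fst p \<tau>0"
proof -
  note M = sok_D(1)[OF S]
  have "(\<tau>0, \<tau>) \<in> {(a, b). a \<in> elems S \<and> b \<in> elems S \<and> fcs S a \<inter> fcs S b \<noteq> {}}\<^sup>*"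
    using mesh_D(9)[OF M t] .
  thus ?thesis
  proof (induction rule: rtrancl_induct)
    case base thus ?case by simp
  next
    case (step b c)
    hence bc: "b \<in> elems S" "c \<in> elems S" "fcs S b \<inter> fcs S c \<noteq> {}" by auto
    show ?case
    proof (cases "b = c")
      case True thus ?thesis using step by simp
    next
      case False
      obtain f where "f \<in> fcs S b" "f \<in> fcs S c" using bc(3) by blast
      thus ?thesis using stepA[OF S p h bc(1,2) False] step by simp
    qed
  qed
qed

lemma tnodes_sub: "tnodes S \<subseteq> NR S" by (auto simp: tnodes_def)

lemma tnodes_finite: "setting_ok S \<Longrightarrow> finite (tnodes S)"
  using rf_D(1)[OF sok_D(2)] tnodes_sub finite_subset by (metis finite_Diff)

lemma Msub_finite: "setting_ok S \<Longrightarrow> i \<in> tnodes S \<Longrightarrow> finite (Msub S i)"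
  using Msub_sub mesh_D(1)[OF sok_D(1)] finite_subset by metis

lemma divRT_zero[simp]: "divRT S (\<lambda>g. 0) \<tau> = 0"
  by (simp add: divRT_def Qf_def)

lemma stepD:
  assumes S: "setting_ok S" and p: "p \<in> Lh S"
    and h: "\<forall>v\<in>Hh0 S. ipB S (emb S p) (emb S (divB S v)) = 0"
    and i: "i \<in> tnodes S" and s: "\<sigma> \<in> Msub S i" and k: "kS S i \<sigma> > 0"
  shows "snd p i = fst p \<sigma>"
proof -
  note M = sok_D(1)[OF S]
  have se: "\<sigma> \<in> elems S" using Msub_sub[OF S i] s by auto
  have iN: "i \<in> nodes S - droots S" using i rf_D(6)[OF sok_D(2)[OF S]] by (auto simp: tnodes_def)
  define v where "v = ((\<lambda>g. 0) :: 'b \<Rightarrow> real, (\<lambda>j \<tau>. if j = i \<and> \<tau> = \<sigma> then 1 else 0) :: 'c \<Rightarrow> 'a set \<Rightarrow> real, (\<lambda>e. 0) :: 'c \<times> 'c \<Rightarrow> real)"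
  have vH: "v \<in> Hh0 S" using i s by (auto simp: Hh0_def v_def)
  have d1: "(\<Sum>j\<in>tnodes S. kS S j \<tau> * (if j = i \<and> \<tau> = \<sigma> then 1 else 0)) = (if \<tau> = \<sigma> then kS S i \<sigma> else 0)" for \<tau>
  proof -
    have "(\<Sum>j\<in>tnodes S. kS S j \<tau> * (if j = i \<and> \<tau> = \<sigma> then 1 else 0)) = (\<Sum>j\<in>tnodes S. if i = j then (if \<tau> = \<sigma> then kS S i \<sigma> else 0) else 0)"
      by (rule sum.cong) auto
    thus ?thesis using tnodes_finite[OF S] i by (simp add: sum.delta)
  qed
  have d2: "(\<Sum>\<tau>\<in>Msub S j. kS S j \<tau> * (if j = i \<and> \<tau> = \<sigma> then 1 else 0) * mm \<tau>) = (if j = i then kS S i \<sigma> * mm \<sigma> else 0)"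
    if "j \<in> tnodes S" for j
  proof -
    have "(\<Sum>\<tau>\<in>Msub S j. kS S j \<tau> * (if j = i \<and> \<tau> = \<sigma> then 1 else 0) * mm \<tau>) = (\<Sum>\<tau>\<in>Msub S j. if \<sigma> = \<tau> then (if j = i then kS S i \<sigma> * mm \<sigma> else 0) else 0)"
      by (rule sum.cong) auto
    thus ?thesis using Msub_finite[OF S that] s by (auto simp add: sum.delta)
  qed
  have dv: "divB S v = (\<lambda>\<tau>. - (if \<tau> = \<sigma> then kS S i \<sigma> else 0), \<lambda>j. if j = i then kS S i \<sigma> * mm \<sigma> else 0)"
  proof -
    have d2i: "(\<Sum>\<tau>\<in>Msub S i. kS S i \<tau> * (if \<tau> = \<sigma> then 1 else 0) * mm \<tau>) = kS S i \<sigma> * mm \<sigma>"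
      using d2[OF i] by simp
    show ?thesis unfolding v_def divB_expl[OF S] using d1 d2 d2i i by (auto intro!: ext)
  qed
  have e1: "(\<Sum>\<tau>\<in>elems S. fst p \<tau> * - (if \<tau> = \<sigma> then kS S i \<sigma> else 0) * mm \<tau>) = - (fst p \<sigma> * kS S i \<sigma> * mm \<sigma>)"
  proof -
    have "(\<Sum>\<tau>\<in>elems S. fst p \<tau> * - (if \<tau> = \<sigma> then kS S i \<sigma> else 0) * mm \<tau>) = (\<Sum>\<tau>\<in>elems S. if \<sigma> = \<tau> then - (fst p \<sigma> * kS S i \<sigma> * mm \<sigma>) else 0)"
      by (rule sum.cong) auto
    thus ?thesis using mesh_D(1)[OF M] se by (simp add: sum.delta)
  qed
  have e2: "(\<Sum>j\<in>nodes S - droots S. snd p j * (if j = i then kS S i \<sigma> * mm \<sigma> else 0)) = snd p i * kS S i \<sigma> * mm \<sigma>"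
  proof -
    have "(\<Sum>j\<in>nodes S - droots S. snd p j * (if j = i then kS S i \<sigma> * mm \<sigma> else 0)) = (\<Sum>j\<in>nodes S - droots S. if i = j then snd p i * kS S i \<sigma> * mm \<sigma> else 0)"
      by (rule sum.cong) auto
    thus ?thesis using rf_D(1)[OF sok_D(2)[OF S]] iN by (simp add: sum.delta)
  qed
  have "0 = ipB S (emb S p) (emb S (divB S v))" using h vH by simp
  also have "\<dots> = kS S i \<sigma> * mm \<sigma> * (snd p i - fst p \<sigma>)"
    unfolding ipB_emb[OF S] dv fst_conv snd_conv e1 e2 by (simp add: algebra_simps)
  finally show ?thesis using k mesh_D(2)[OF M se] by simp
qed

lemma edge_in: "j \<in> NR S \<Longrightarrow> (par S j, j) \<in> edges S"
  by (auto simp: edges_def)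

lemma rev_edge_notin:
  assumes R: "rooted_forest S" and j: "j \<in> NR S"
  shows "(j, par S j) \<notin> edges S"
proof
  assume "(j, par S j) \<in> edges S"
  then obtain j' where j': "j' \<in> NR S" "par S j' = j" "j' = par S j" by (auto simp: edges_def)
  thus False using par_par_neq[OF R j] by auto
qed

lemma Lh_zero: "p \<in> Lh S \<Longrightarrow> i \<notin> nodes S - droots S \<Longrightarrow> snd p i = 0"
  by (auto simp: Lh_def)

lemma sum_pick:
  assumes "finite A" "p \<in> Lh S" "A = nodes S - droots S"
  shows "(\<Sum>i\<in>A. snd p i * (if i = a then 1 else 0)) = snd p a"
proof -
  have "(\<Sum>i\<in>A. snd p i * (if i = a then 1 else 0)) = (\<Sum>i\<in>A. if a = i then snd p a else 0)"
    by (rule sum.cong) auto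
  also have "\<dots> = snd p a" using assms Lh_zero[OF assms(2), of a] by (simp add: sum.delta)
  finally show ?thesis .
qed

lemma stepC:
  assumes S: "setting_ok S" and p: "p \<in> Lh S"
    and h: "\<forall>v\<in>Hh0 S. ipB S (emb S p) (emb S (divB S v)) = 0"
    and j: "j \<in> NR S"
  shows "snd p (par S j) = snd p j"
proof -
  note R = sok_D(2)[OF S]
  define qN where "qN = (\<lambda>e. if e = (par S j, j) then 1 else (0::real))"
  define v where "v = ((\<lambda>g. 0) :: 'b \<Rightarrow> real, (\<lambda>i \<tau>. 0) :: 'c \<Rightarrow> 'a set \<Rightarrow> real, qN)"
  have vH: "v \<in> Hh0 S" using edge_in[OF j] by (auto simp: Hh0_def v_def qN_def)
  have pj: "par S j \<noteq> j" using par_neq[OF R j] .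
  have fl: "flx S qN k i = (if k = par S j \<and> i = j then 1 else 0) - (if i = par S j \<and> k = j then 1 else 0)" for k i
    using edge_in[OF j] rev_edge_notin[OF R j] pj unfolding flx_def qN_def by auto
  have u: "(if i \<in> tnodes S then (\<Sum>\<tau>\<in>Msub S i. kS S i \<tau> * 0 * mm \<tau>) - flx S qN (par S i) i
          else - (\<Sum>k \<in> nbrs S i. flx S qN k i)) = (if i = par S j then 1 else 0) - (if i = j then 1 else 0)" for i
  proof (cases "i \<in> tnodes S")
    case True
    have "i \<noteq> par S j"
    proof
      assume ip: "i = par S j"
      have iNR: "i \<in> NR S" using True by (auto simp: tnodes_def)
      have "{j, par S i} \<subseteq> nbrs S i" using iNR j ip by (auto simp: nbrs_def)
      moreover have "j \<noteq> par S i"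
        using par_par_neq[OF R j] iNR ip by auto
      ultimately have "card {j, par S i} \<le> card (nbrs S i)" using nbrs_finite[OF R, of i] card_mono[of "nbrs S i" "{j, par S i}"] by blast
      thus False using \<open>j \<noteq> par S i\<close> True by (auto simp: tnodes_def)
    qed
    thus ?thesis using True fl by auto
  next
    case False
    have s1: "(\<Sum>k\<in>nbrs S i. (if k = par S j \<and> i = j then 1 else (0::real))) = (if i = j then 1 else 0)"
    proof -
      have "(\<Sum>k\<in>nbrs S i. (if k = par S j \<and> i = j then 1 else (0::real))) = (\<Sum>k\<in>nbrs S i. if par S j = k then (if i = j then 1 else 0) else 0)"
        by (rule sum.cong) auto
      also have "\<dots> = (if i = j then 1 else 0)" using nbrs_finite[OF R, of i] j by (auto simp: sum.delta nbrs_def)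
      finally show ?thesis .
    qed
    have s2: "(\<Sum>k\<in>nbrs S i. (if i = par S j \<and> k = j then 1 else (0::real))) = (if i = par S j then 1 else 0)"
    proof -
      have "(\<Sum>k\<in>nbrs S i. (if i = par S j \<and> k = j then 1 else (0::real))) = (\<Sum>k\<in>nbrs S i. if j = k then (if i = par S j then 1 else 0) else 0)"
        by (rule sum.cong) auto
      also have "\<dots> = (if i = par S j then 1 else 0)" using nbrs_finite[OF R, of i] j by (auto simp: sum.delta nbrs_def)
      finally show ?thesis .
    qed
    show ?thesis using False s1 s2 by (simp add: fl sum_subtractf)
  qed
  have dv: "divB S v = (\<lambda>\<tau>. 0, \<lambda>i. (if i = par S j then 1 else 0) - (if i = j then 1 else 0))"
    unfolding v_def divB_expl[OF S] using u by (auto intro!: ext)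
  have fin: "finite (nodes S - droots S)" using rf_D(1)[OF R] by simp
  have "0 = ipB S (emb S p) (emb S (divB S v))" using h vH by simp
  also have "\<dots> = (\<Sum>i\<in>nodes S - droots S. snd p i * (if i = par S j then 1 else 0))
                 - (\<Sum>i\<in>nodes S - droots S. snd p i * (if i = j then 1 else 0))"
    unfolding ipB_emb[OF S] dv by (simp add: right_diff_distrib sum_subtractf)
  also have "\<dots> = snd p (par S j) - snd p j"
    using sum_pick[OF fin p refl] by simp
  finally show ?thesis by simp
qed

lemma nullspace:
  assumes S: "setting_ok S" and p: "p \<in> Lh S"
    and h: "\<forall>v\<in>Hh0 S. ipB S (emb S p) (emb S (divB S v)) = 0"
  shows "p = (\<lambda>\<tau>. 0, \<lambda>i. 0)"
proof -
  note R = sok_D(2)[OF S]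
  note M = sok_D(1)[OF S]
  have C: "\<And>j. j \<in> NR S \<Longrightarrow> snd p (par S j) = snd p j" using stepC[OF S p h] by blast
  have trm: "\<And>t. t \<in> tnodes S \<Longrightarrow> \<exists>\<sigma>\<in>elems S. snd p t = fst p \<sigma>"
  proof -
    fix t assume t: "t \<in> tnodes S"
    obtain \<sigma> where "\<sigma> \<in> Msub S t" "kS S t \<sigma> > 0" using kS_pos[OF S t] by blast
    thus "\<exists>\<sigma>\<in>elems S. snd p t = fst p \<sigma>" using stepD[OF S p h t] Msub_sub[OF S t] by blast
  qed
  have up: "\<And>j. j \<in> NR S \<Longrightarrow> \<exists>t\<in>tnodes S. snd p t = snd p j"
  proof -
    fix j assume j: "j \<in> NR S"
    obtain t k where t: "t \<in> tnodes S" "(par S ^^ k) t = j" "\<forall>i\<le>k. (par S ^^ i) t \<in> NR S"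
      using descent[OF R j] by blast
    thus "\<exists>t\<in>tnodes S. snd p t = snd p j" using prop_chain[of S "snd p", OF C t(3)] by auto
  qed
  obtain r where r: "r \<in> droots S" using rf_D(7)[OF R] by blast
  have rr: "r \<in> roots S" using r rf_D(6)[OF R] by auto
  have "card {j \<in> NR S. par S j = r} = 1" using rf_D(5)[OF R rr] .
  then obtain j0 where j0: "j0 \<in> NR S" "par S j0 = r" by (metis (mono_tags, lifting) card_1_singletonE mem_Collect_eq singletonI)
  have "snd p r = 0" using Lh_zero[OF p] r by auto
  hence "snd p j0 = 0" using C[OF j0(1)] j0(2) by simp
  then obtain t0 where t0: "t0 \<in> tnodes S" "snd p t0 = 0" using up[OF j0(1)] by auto
  obtain \<sigma>0 where s0: "\<sigma>0 \<in> elems S" "fst p \<sigma>0 = 0" using trm[OF t0(1)] t0(2) by auto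
  have D0: "fst p \<tau> = 0" for \<tau>
  proof (cases "\<tau> \<in> elems S")
    case True thus ?thesis using stepB[OF S p h s0(1) True] s0 by simp
  next
    case False thus ?thesis using p by (auto simp: Lh_def)
  qed
  have Tz: "\<And>t. t \<in> tnodes S \<Longrightarrow> snd p t = 0" using trm D0 by auto
  have NRz: "\<And>j. j \<in> NR S \<Longrightarrow> snd p j = 0" using up Tz by fastforce
  have N0: "snd p i = 0" for i
  proof (cases "i \<in> nodes S - droots S")
    case False thus ?thesis using Lh_zero[OF p] by simp
  next
    case True
    show ?thesis
    proof (cases "i \<in> roots S")
      case False thus ?thesis using NRz True by auto
    next
      case True
      have "card {j \<in> NR S. par S j = i} = 1" using rf_D(5)[OF R True] .
      then obtain j where j: "j \<in> NR S" "par S j = i" by (metis (mono_tags, lifting) card_1_singletonE mem_Collect_eq singletonI)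
      thus ?thesis using C[OF j(1)] NRz[OF j(1)] by simp
    qed
  qed
  show ?thesis using D0 N0 by (cases p) (auto intro!: ext)
qed

definition addT :: "('a, 'f, 'n) dflux \<Rightarrow> ('a, 'f, 'n) dflux \<Rightarrow> ('a, 'f, 'n) dflux" where
  "addT q q' = (\<lambda>f. fst q f + fst q' f, \<lambda>i \<tau>. fst (snd q) i \<tau> + fst (snd q') i \<tau>, \<lambda>e. snd (snd q) e + snd (snd q') e)"
definition smulT :: "real \<Rightarrow> ('a, 'f, 'n) dflux \<Rightarrow> ('a, 'f, 'n) dflux" where
  "smulT c q = (\<lambda>f. c * fst q f, \<lambda>i \<tau>. c * fst (snd q) i \<tau>, \<lambda>e. c * snd (snd q) e)"
definition zeroT :: "('a, 'f, 'n) dflux" where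
  "zeroT = (\<lambda>f. 0, \<lambda>i \<tau>. 0, \<lambda>e. 0)"
definition addP :: "('a, 'n) dpres \<Rightarrow> ('a, 'n) dpres \<Rightarrow> ('a, 'n) dpres" where
  "addP p p' = (\<lambda>\<tau>. fst p \<tau> + fst p' \<tau>, \<lambda>i. snd p i + snd p' i)"
definition smulP :: "real \<Rightarrow> ('a, 'n) dpres \<Rightarrow> ('a, 'n) dpres" where
  "smulP c p = (\<lambda>\<tau>. c * fst p \<tau>, \<lambda>i. c * snd p i)"

lemma lumped_gen:
  assumes "setting_ok S"
  shows "lumped S q v =
     (\<Sum>\<tau> \<in> elems S. \<Sum>f \<in> fcs S \<tau>.
         (fdist S \<tau> f / (kappa S \<tau> * farea S f)) * Qf S \<tau> f (fst q) * Qf S \<tau> f (fst v))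
     + (\<Sum>i \<in> tnodes S. \<Sum>\<tau>\<in>Msub S i. fst (snd q) i \<tau> * fst (snd v) i \<tau> * mm \<tau>)
     + (\<Sum>e \<in> edges S. snd (snd q) e * snd (snd v) e / kN S e)"
  using lumped_expl[OF assms, of "fst q" "fst (snd q)" "snd (snd q)" "fst v" "fst (snd v)" "snd (snd v)"] by simp

lemma divB_gen:
  assumes "setting_ok S"
  shows "divB S q =
     (\<lambda>\<tau>. divRT S (fst q) \<tau> - (\<Sum>i \<in> tnodes S. kS S i \<tau> * fst (snd q) i \<tau>),
      \<lambda>i. if i \<in> tnodes S
          then (\<Sum>\<tau>\<in>Msub S i. kS S i \<tau> * fst (snd q) i \<tau> * mm \<tau>) - flx S (snd (snd q)) (par S i) i
          else - (\<Sum>j \<in> nbrs S i. flx S (snd (snd q)) j i))"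
  using divB_expl[OF assms, of "fst q" "fst (snd q)" "snd (snd q)"] by simp

lemma lumped_add1:
  assumes "setting_ok S"
  shows "lumped S (addT q q') v = lumped S q v + lumped S q' v"
  unfolding lumped_gen[OF assms] addT_def Qf_def
  by (simp add: algebra_simps sum.distrib add_divide_distrib)

lemma lumped_smul1:
  assumes "setting_ok S"
  shows "lumped S (smulT c q) v = c * lumped S q v"
  unfolding lumped_gen[OF assms] smulT_def Qf_def
  by (simp add: algebra_simps sum_distrib_left)

lemma lumped_sym:
  assumes "setting_ok S"
  shows "lumped S q v = lumped S v q"
  unfolding lumped_gen[OF assms] by (simp add: algebra_simps)

lemma lumped_zero1:
  assumes "setting_ok S"
  shows "lumped S zeroT v = 0"
  unfolding lumped_gen[OF assms] zeroT_def Qf_def by simp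

lemma flx_add: "flx S (\<lambda>e. a e + b e) j i = flx S a j i + flx S b j i"
  by (simp add: flx_def)
lemma flx_smul: "flx S (\<lambda>e. c * a e) j i = c * flx S a j i"
  by (simp add: flx_def)
lemma divRT_add: "divRT S (\<lambda>f. a f + b f) \<tau> = divRT S a \<tau> + divRT S b \<tau>"
  by (simp add: divRT_def Qf_def algebra_simps sum.distrib add_divide_distrib)
lemma divRT_smul: "divRT S (\<lambda>f. c * a f) \<tau> = c * divRT S a \<tau>"
  by (simp add: divRT_def Qf_def algebra_simps sum_distrib_left)

lemma divB_add:
  assumes "setting_ok S"
  shows "divB S (addT q q') = addP (divB S q) (divB S q')"
  unfolding divB_gen[OF assms] addT_def addP_def
  by (auto simp: flx_add divRT_add algebra_simps sum.distrib intro!: ext)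

lemma divB_smul:
  assumes "setting_ok S"
  shows "divB S (smulT c q) = smulP c (divB S q)"
  unfolding divB_gen[OF assms] smulT_def smulP_def
  by (auto simp: flx_smul divRT_smul algebra_simps sum_distrib_left intro!: ext)

lemma ipB_add1:
  assumes "setting_ok S"
  shows "ipB S (emb S (addP p p')) (emb S u) = ipB S (emb S p) (emb S u) + ipB S (emb S p') (emb S u)"
  unfolding ipB_emb[OF assms] addP_def by (simp add: algebra_simps sum.distrib)

lemma ipB_smul1:
  assumes "setting_ok S"
  shows "ipB S (emb S (smulP c p)) (emb S u) = c * ipB S (emb S p) (emb S u)"
  unfolding ipB_emb[OF assms] smulP_def by (simp add: algebra_simps sum_distrib_left)

lemma ipB_add2:
  assumes "setting_ok S"
  shows "ipB S (emb S p) (emb S (addP u u')) = ipB S (emb S p) (emb S u) + ipB S (emb S p) (emb S u')"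
  unfolding ipB_emb[OF assms] addP_def by (simp add: algebra_simps sum.distrib)

lemma ipB_smul2:
  assumes "setting_ok S"
  shows "ipB S (emb S p) (emb S (smulP c u)) = c * ipB S (emb S p) (emb S u)"
  unfolding ipB_emb[OF assms] smulP_def by (simp add: algebra_simps sum_distrib_left)

lemma lumped_pos:
  assumes S: "setting_ok S" and q: "q \<in> Hh0 S" "q \<noteq> zeroT"
  shows "lumped S q q > 0"
proof -
  note M = sok_D(1)[OF S]
  note R = sok_D(2)[OF S]
  define A where "A = (\<Sum>\<tau> \<in> elems S. \<Sum>f \<in> fcs S \<tau>.
         (fdist S \<tau> f / (kappa S \<tau> * farea S f)) * Qf S \<tau> f (fst q) * Qf S \<tau> f (fst q))"
  define B2 where "B2 = (\<Sum>i \<in> tnodes S. \<Sum>\<tau>\<in>Msub S i. fst (snd q) i \<tau> * fst (snd q) i \<tau> * mm \<tau>)"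
  define C where "C = (\<Sum>e \<in> edges S. snd (snd q) e * snd (snd q) e / kN S e)"
  have L: "lumped S q q = A + B2 + C" unfolding lumped_gen[OF S] A_def B2_def C_def ..
  have kN: "\<And>e. e \<in> edges S \<Longrightarrow> kN S e > 0" using S by (auto simp: setting_ok_def coupling_ok_def)
  have wpos: "fdist S \<tau> f / (kappa S \<tau> * farea S f) > 0" if "\<tau> \<in> elems S" "f \<in> fcs S \<tau>" for \<tau> f
    using mesh_D(5)[OF M that] mesh_D(8)[OF M that(1)] mesh_D(6)[OF M] mesh_D(3)[OF M that(1)] that(2)
    by (auto intro!: divide_pos_pos mult_pos_pos)
  have At: "0 \<le> (fdist S \<tau> f / (kappa S \<tau> * farea S f)) * Qf S \<tau> f (fst q) * Qf S \<tau> f (fst q)"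
    if "\<tau> \<in> elems S" "f \<in> fcs S \<tau>" for \<tau> f
    using mult_nonneg_nonneg[OF less_imp_le[OF wpos[OF that]] zero_le_square[of "Qf S \<tau> f (fst q)"]]
    by (simp only: mult.assoc)
  have A0: "A \<ge> 0" unfolding A_def using At by (auto intro!: sum_nonneg)
  have B0: "B2 \<ge> 0" unfolding B2_def using Msub_sub[OF S] mesh_D(2)[OF M]
    by (intro sum_nonneg) (auto intro!: mult_nonneg_nonneg less_imp_le)
  have C0: "C \<ge> 0" unfolding C_def using kN by (intro sum_nonneg) (auto intro!: divide_nonneg_pos)
  have finE: "finite (edges S)" using rf_D(1)[OF R] by (simp add: edges_def)
  have "A > 0 \<or> B2 > 0 \<or> C > 0"
  proof -
    obtain qD qS qN where qq: "q = (qD, qS, qN)" by (cases q) auto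
    have H: "\<And>f. f \<notin> mfaces S - bfaces S \<Longrightarrow> qD f = 0"
      "\<And>i \<tau>. \<not> (i \<in> tnodes S \<and> \<tau> \<in> Msub S i) \<Longrightarrow> qS i \<tau> = 0"
      "\<And>e. e \<notin> edges S \<Longrightarrow> qN e = 0" using q(1) qq by (auto simp: Hh0_def)
    have "(\<exists>f. qD f \<noteq> 0) \<or> (\<exists>i \<tau>. qS i \<tau> \<noteq> 0) \<or> (\<exists>e. qN e \<noteq> 0)"
      using q(2) qq unfolding zeroT_def by (metis ext)
    moreover
    { fix f assume f: "qD f \<noteq> 0"
      hence fm: "f \<in> mfaces S" using H(1) by blast
      have "cells S f \<noteq> {}" using mesh_D(6)[OF M fm] by (metis card.empty not_one_le_zero)
      then obtain \<tau> where t: "\<tau> \<in> elems S" "f \<in> fcs S \<tau>" by (auto simp: cells_def)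
      have "0 < (fdist S \<tau> f / (kappa S \<tau> * farea S f)) * Qf S \<tau> f qD * Qf S \<tau> f qD"
      proof -
        have qq: "Qf S \<tau> f qD * Qf S \<tau> f qD = qD f * qD f" using mesh_D(5)[OF M t] by (auto simp: Qf_def)
        have "0 < qD f * qD f" using f not_real_square_gt_zero by blast
        from mult_pos_pos[OF wpos[OF t] this] show ?thesis using qq by (simp only: mult.assoc)
      qed
      hence "0 < (\<Sum>f \<in> fcs S \<tau>. (fdist S \<tau> f / (kappa S \<tau> * farea S f)) * Qf S \<tau> f qD * Qf S \<tau> f qD)"
        using fcs_finite[OF M t(1)] t At[of \<tau>] qq by (intro sum_pos2[of _ f]) auto
      hence "A > 0" unfolding A_def using mesh_D(1)[OF M] t At qq
        by (intro sum_pos2[of _ \<tau>] sum_nonneg) auto }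
    moreover
    { fix i \<tau> assume f: "qS i \<tau> \<noteq> 0"
      hence it: "i \<in> tnodes S" "\<tau> \<in> Msub S i" using H(2) by blast+
      have te: "\<tau> \<in> elems S" using Msub_sub[OF S it(1)] it(2) by auto
      have "0 < (\<Sum>\<tau>\<in>Msub S i. qS i \<tau> * qS i \<tau> * mm \<tau>)"
      proof (rule sum_pos2[of _ \<tau>])
        have "0 < qS i \<tau> * qS i \<tau>" using f not_real_square_gt_zero by blast
        thus "0 < qS i \<tau> * qS i \<tau> * mm \<tau>" using mesh_D(2)[OF M te] by simp
        show "finite (Msub S i)" "\<tau> \<in> Msub S i" using Msub_finite[OF S it(1)] it by auto
        show "0 \<le> qS i \<sigma> * qS i \<sigma> * mm \<sigma>" if "\<sigma> \<in> Msub S i" for \<sigma>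
          using mult_nonneg_nonneg[OF zero_le_square[of "qS i \<sigma>"] less_imp_le[OF mesh_D(2)[OF M, of \<sigma>]]]
            Msub_sub[OF S it(1)] that by auto
      qed
      moreover have "0 \<le> (\<Sum>\<tau>\<in>Msub S j. qS j \<tau> * qS j \<tau> * mm \<tau>)" if "j \<in> tnodes S" for j
      proof (rule sum_nonneg)
        fix \<sigma> assume "\<sigma> \<in> Msub S j"
        thus "0 \<le> qS j \<sigma> * qS j \<sigma> * mm \<sigma>"
          using mult_nonneg_nonneg[OF zero_le_square[of "qS j \<sigma>"] less_imp_le[OF mesh_D(2)[OF M, of \<sigma>]]]
            Msub_sub[OF S that] by auto
      qed
      ultimately have "B2 > 0" unfolding B2_def using tnodes_finite[OF S] it qq
        by (intro sum_pos2[of _ i]) auto }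
    moreover
    { fix e assume f: "qN e \<noteq> 0"
      hence e: "e \<in> edges S" using H(3) by blast
      have sq: "0 < qN e * qN e" using f not_real_square_gt_zero by blast
      have "C > 0" unfolding C_def using finE e divide_pos_pos[OF sq kN[OF e]] kN qq
        by (intro sum_pos2[of _ e]) (auto intro!: divide_nonneg_pos) }
    ultimately show ?thesis by blast
  qed
  thus ?thesis using L A0 B0 C0 by linarith
qed

definition decF :: "('f + ('n \<times> 'a set) + ('n \<times> 'n) \<Rightarrow> real) \<Rightarrow> ('a, 'f, 'n) dflux" where
  "decF x = (\<lambda>f. x (Inl f), \<lambda>i \<tau>. x (Inr (Inl (i, \<tau>))), \<lambda>e. x (Inr (Inr e)))"
definition encF :: "('a, 'f, 'n) dflux \<Rightarrow> ('f + ('n \<times> 'a set) + ('n \<times> 'n) \<Rightarrow> real)" where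
  "encF q = (\<lambda>k. case k of Inl f \<Rightarrow> fst q f | Inr (Inl (i, \<tau>)) \<Rightarrow> fst (snd q) i \<tau> | Inr (Inr e) \<Rightarrow> snd (snd q) e)"
definition IF :: "('a, 'f, 'n) setting \<Rightarrow> ('f + ('n \<times> 'a set) + ('n \<times> 'n)) set" where
  "IF S = Inl ` (mfaces S - bfaces S) \<union> Inr ` Inl ` (SIGMA i:tnodes S. Msub S i) \<union> Inr ` Inr ` edges S"

lemma IF_finite:
  assumes S: "setting_ok S" shows "finite (IF S)"
proof -
  have "finite (SIGMA i:tnodes S. Msub S i)" using tnodes_finite[OF S] Msub_finite[OF S] by (rule finite_SigmaI)
  moreover have "finite (edges S)" using rf_D(1)[OF sok_D(2)[OF S]] by (simp add: edges_def)
  moreover have "finite (mfaces S)" using mesh_D(4)[OF sok_D(1)[OF S]] .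
  ultimately show ?thesis unfolding IF_def by auto
qed

lemma decF_in: "x \<in> VI (IF S) \<Longrightarrow> decF x \<in> Hh0 S"
  by (auto simp: VI_def IF_def decF_def Hh0_def)

lemma encF_in: assumes "q \<in> Hh0 S" shows "encF q \<in> VI (IF S)"
proof -
  obtain a b c where q: "q = (a, b, c)" by (cases q) auto
  show ?thesis unfolding VI_def
  proof (intro CollectI allI impI)
    fix k assume k: "k \<notin> IF S"
    show "encF q k = 0"
    proof (cases k)
      case (Inl f) thus ?thesis using k assms q by (auto simp: IF_def encF_def Hh0_def)
    next
      case (Inr r)
      show ?thesis
      proof (cases r)
        case (Inl ia)
        obtain i \<tau> where "ia = (i, \<tau>)" by (cases ia) auto
        thus ?thesis using k assms q Inr Inl by (auto simp: IF_def encF_def Hh0_def image_iff)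
      next
        case (Inr e)
        obtain e1 e2 where "e = (e1, e2)" by (cases e) auto
        thus ?thesis using k assms q \<open>k = Inr r\<close> Inr by (auto simp: IF_def encF_def Hh0_def image_iff)
      qed
    qed
  qed
qed

lemma decF_encF: "decF (encF q) = q"
  by (cases q) (simp add: decF_def encF_def)

lemma decF_add: "decF (\<lambda>k. x k + y k) = addT (decF x) (decF y)"
  by (simp add: decF_def addT_def)
lemma decF_smul: "decF (\<lambda>k. c * x k) = smulT c (decF x)"
  by (simp add: decF_def smulT_def)
lemma decF_zero: "decF x = zeroT \<Longrightarrow> x = (\<lambda>k. 0)"
proof
  fix k assume h: "decF x = zeroT"
  have a: "x (Inl f) = 0" for f using fun_cong[OF arg_cong[where f=fst, OF h], of f] by (simp add: decF_def zeroT_def)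
  have b: "x (Inr (Inl (i, \<tau>))) = 0" for i \<tau>
    using fun_cong[OF fun_cong[OF arg_cong[where f="\<lambda>q. fst (snd q)", OF h], of i], of \<tau>] by (simp add: decF_def zeroT_def)
  have c: "x (Inr (Inr e)) = 0" for e
    using fun_cong[OF arg_cong[where f="\<lambda>q. snd (snd q)", OF h], of e] by (simp add: decF_def zeroT_def)
  show "x k = 0"
  proof (cases k)
    case (Inl f) thus ?thesis using a by simp
  next
    case (Inr r)
    show ?thesis
    proof (cases r)
      case (Inl ia) thus ?thesis using b Inr by (cases ia) simp
    next
      case (Inr e) thus ?thesis using c \<open>k = Inr r\<close> by simp
    qed
  qed
qed

lemma addT_Hh0: "q \<in> Hh0 S \<Longrightarrow> q' \<in> Hh0 S \<Longrightarrow> addT q q' \<in> Hh0 S"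
  by (cases q; cases q') (auto simp: Hh0_def addT_def)
lemma smulT_Hh0: "q \<in> Hh0 S \<Longrightarrow> smulT c q \<in> Hh0 S"
  by (cases q) (auto simp: Hh0_def smulT_def)

definition rhs :: "('a::euclidean_space, 'f, 'n) setting \<Rightarrow> ('a, 'n) dpres \<Rightarrow> ('a, 'f, 'n) dflux \<Rightarrow> real" where
  "rhs S p v = - ipB S (emb S p) (emb S (divB S v))"

lemma rhs_add2: "setting_ok S \<Longrightarrow> rhs S p (addT v v') = rhs S p v + rhs S p v'"
  unfolding rhs_def by (simp add: divB_add ipB_add2)
lemma rhs_smul2: "setting_ok S \<Longrightarrow> rhs S p (smulT c v) = c * rhs S p v"
  unfolding rhs_def by (simp add: divB_smul ipB_smul2)
lemma rhs_add1: "setting_ok S \<Longrightarrow> rhs S (addP p p') v = rhs S p v + rhs S p' v"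
  unfolding rhs_def by (simp add: ipB_add1)
lemma rhs_smul1: "setting_ok S \<Longrightarrow> rhs S (smulP c p) v = c * rhs S p v"
  unfolding rhs_def by (simp add: ipB_smul1)

lemma Dh_exists:
  assumes S: "setting_ok S"
  shows "\<exists>q\<in>Hh0 S. \<forall>v\<in>Hh0 S. lumped S q v = rhs S p v"
proof -
  have "GOK (IF S) (\<lambda>x y. lumped S (decF x) (decF y)) (\<lambda>y. rhs S p (decF y))"
    unfolding GOK_def
  proof (intro conjI allI impI)
    fix x y z show "lumped S (decF (\<lambda>k. x k + y k)) (decF z) = lumped S (decF x) (decF z) + lumped S (decF y) (decF z)"
      by (simp add: decF_add lumped_add1[OF S])
  next
    fix c x z show "lumped S (decF (\<lambda>k. c * x k)) (decF z) = c * lumped S (decF x) (decF z)"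
      by (simp add: decF_smul lumped_smul1[OF S])
  next
    fix x y show "lumped S (decF x) (decF y) = lumped S (decF y) (decF x)" by (rule lumped_sym[OF S])
  next
    fix x assume "x \<in> VI (IF S)" "x \<noteq> (\<lambda>k. 0)"
    thus "0 < lumped S (decF x) (decF x)" using lumped_pos[OF S decF_in] decF_zero by blast
  next
    fix x y show "rhs S p (decF (\<lambda>k. x k + y k)) = rhs S p (decF x) + rhs S p (decF y)"
      by (simp add: decF_add rhs_add2[OF S])
  next
    fix c x show "rhs S p (decF (\<lambda>k. c * x k)) = c * rhs S p (decF x)"
      by (simp add: decF_smul rhs_smul2[OF S])
  qed
  from G_exists[OF IF_finite[OF S] this] obtain x0 where x0: "x0 \<in> VI (IF S)"
    "\<forall>w\<in>VI (IF S). lumped S (decF x0) (decF w) = rhs S p (decF w)" by blast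
  have "\<forall>v\<in>Hh0 S. lumped S (decF x0) v = rhs S p v"
  proof
    fix v assume v: "v \<in> Hh0 S"
    show "lumped S (decF x0) v = rhs S p v" using x0(2) encF_in[OF v] decF_encF[of v] by metis
  qed
  thus ?thesis using decF_in[OF x0(1)] by blast
qed

lemma Dh_unique:
  assumes S: "setting_ok S" and q: "q1 \<in> Hh0 S" "q2 \<in> Hh0 S"
    "\<forall>v\<in>Hh0 S. lumped S q1 v = rhs S p v" "\<forall>v\<in>Hh0 S. lumped S q2 v = rhs S p v"
  shows "q1 = q2"
proof -
  define d where "d = addT q1 (smulT (-1) q2)"
  have dH: "d \<in> Hh0 S" unfolding d_def by (intro addT_Hh0 smulT_Hh0 q)
  have "lumped S d d = lumped S q1 d + (-1) * lumped S q2 d"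
    unfolding d_def by (simp add: lumped_add1[OF S] lumped_smul1[OF S])
  also have "\<dots> = 0" using q(3,4) dH by simp
  finally have "d = zeroT" using lumped_pos[OF S dH] by force
  hence "fst q1 f = fst q2 f" "fst (snd q1) i \<tau> = fst (snd q2) i \<tau>" "snd (snd q1) e = snd (snd q2) e" for f i \<tau> e
    unfolding d_def addT_def smulT_def zeroT_def by (auto dest!: fun_cong)
  thus ?thesis by (simp add: prod_eq_iff ext)
qed

lemma Dh_char:
  assumes S: "setting_ok S"
  shows "Dh S p \<in> Hh0 S" "\<forall>v\<in>Hh0 S. lumped S (Dh S p) v = rhs S p v"
proof -
  have ex: "\<exists>!q. q \<in> Hh0 S \<and> (\<forall>v\<in>Hh0 S. lumped S q v = - ipB S (emb S p) (emb S (divB S v)))"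
    using Dh_exists[OF S, of p] Dh_unique[OF S] unfolding rhs_def by blast
  have "Dh S p \<in> Hh0 S \<and> (\<forall>v\<in>Hh0 S. lumped S (Dh S p) v = - ipB S (emb S p) (emb S (divB S v)))"
    unfolding Dh_def by (rule theI'[OF ex])
  thus "Dh S p \<in> Hh0 S" "\<forall>v\<in>Hh0 S. lumped S (Dh S p) v = rhs S p v" unfolding rhs_def by auto
qed

lemma Dh_add:
  assumes S: "setting_ok S"
  shows "Dh S (addP p p') = addT (Dh S p) (Dh S p')"
proof (rule Dh_unique[OF S Dh_char(1)[OF S] addT_Hh0[OF Dh_char(1)[OF S] Dh_char(1)[OF S]]])
  show "\<forall>v\<in>Hh0 S. lumped S (Dh S (addP p p')) v = rhs S (addP p p') v" using Dh_char(2)[OF S] .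
  show "\<forall>v\<in>Hh0 S. lumped S (addT (Dh S p) (Dh S p')) v = rhs S (addP p p') v"
    using Dh_char(2)[OF S] by (simp add: lumped_add1[OF S] rhs_add1[OF S])
qed

lemma Dh_smul:
  assumes S: "setting_ok S"
  shows "Dh S (smulP c p) = smulT c (Dh S p)"
proof (rule Dh_unique[OF S Dh_char(1)[OF S] smulT_Hh0[OF Dh_char(1)[OF S]]])
  show "\<forall>v\<in>Hh0 S. lumped S (Dh S (smulP c p)) v = rhs S (smulP c p) v" using Dh_char(2)[OF S] .
  show "\<forall>v\<in>Hh0 S. lumped S (smulT c (Dh S p)) v = rhs S (smulP c p) v"
    using Dh_char(2)[OF S] by (simp add: lumped_smul1[OF S] rhs_smul1[OF S])
qed

definition decP :: "('a set + 'n \<Rightarrow> real) \<Rightarrow> ('a, 'n) dpres" where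
  "decP x = (\<lambda>\<tau>. x (Inl \<tau>), \<lambda>i. x (Inr i))"
definition encP :: "('a, 'n) dpres \<Rightarrow> ('a set + 'n \<Rightarrow> real)" where
  "encP p = (\<lambda>k. case k of Inl \<tau> \<Rightarrow> fst p \<tau> | Inr i \<Rightarrow> snd p i)"
definition IP :: "('a, 'f, 'n) setting \<Rightarrow> ('a set + 'n) set" where
  "IP S = Inl ` elems S \<union> Inr ` (nodes S - droots S)"

lemma IP_finite: "setting_ok S \<Longrightarrow> finite (IP S)"
  unfolding IP_def using mesh_D(1)[OF sok_D(1)] rf_D(1)[OF sok_D(2)] by auto

lemma decP_in: "x \<in> VI (IP S) \<Longrightarrow> decP x \<in> Lh S"
  by (auto simp: VI_def IP_def decP_def Lh_def)

lemma encP_in: assumes "p \<in> Lh S" shows "encP p \<in> VI (IP S)"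
  unfolding VI_def
proof (intro CollectI allI impI)
  fix k assume k: "k \<notin> IP S"
  show "encP p k = 0" using k assms by (cases k) (auto simp: IP_def encP_def Lh_def)
qed

lemma decP_encP: "decP (encP p) = p"
  by (cases p) (simp add: decP_def encP_def)
lemma decP_add: "decP (\<lambda>k. x k + y k) = addP (decP x) (decP y)"
  by (simp add: decP_def addP_def)
lemma decP_smul: "decP (\<lambda>k. c * x k) = smulP c (decP x)"
  by (simp add: decP_def smulP_def)
lemma decP_zero: "decP x = (\<lambda>\<tau>. 0, \<lambda>i. 0) \<Longrightarrow> x = (\<lambda>k. 0)"
proof
  fix k assume h: "decP x = (\<lambda>\<tau>. 0, \<lambda>i. 0)"
  have a: "x (Inl f) = 0" for f using fun_cong[OF arg_cong[where f=fst, OF h], of f] by (simp add: decP_def)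
  have b: "x (Inr i) = 0" for i using fun_cong[OF arg_cong[where f=snd, OF h], of i] by (simp add: decP_def)
  show "x k = 0" using a b by (cases k) auto
qed

lemma ipBr_add:
  assumes S: "setting_ok S" and r: "L2Omega S rD"
  shows "ipB S (rD, rN) (emb S (addP w w')) = ipB S (rD, rN) (emb S w) + ipB S (rD, rN) (emb S w')"
  unfolding ipB_r[OF S r] addP_def by (simp add: algebra_simps sum.distrib)

lemma ipBr_smul:
  assumes S: "setting_ok S" and r: "L2Omega S rD"
  shows "ipB S (rD, rN) (emb S (smulP c w)) = c * ipB S (rD, rN) (emb S w)"
  unfolding ipB_r[OF S r] smulP_def by (simp add: algebra_simps sum_distrib_left)

theorem theorem4p6:
  fixes S :: "('a::euclidean_space, 'f, 'n) setting"
    and rD :: "'a \<Rightarrow> real" and rN :: "'n \<Rightarrow> real"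
  assumes "setting_ok S"
    and "L2Omega S rD"
  shows "\<exists>!p. p \<in> Lh S \<and>
           (\<forall>w \<in> Lh S. lumped S (Dh S p) (Dh S w) = ipB S (rD, rN) (emb S w))"
proof -
  note S = assms(1) and r = assms(2)
  define a where "a = (\<lambda>x y. lumped S (Dh S (decP x)) (Dh S (decP y)))"
  define l where "l = (\<lambda>y. ipB S (rD, rN) (emb S (decP y)))"
  have G: "GOK (IP S) a l"
    unfolding GOK_def
  proof (intro conjI allI impI)
    fix x y z show "a (\<lambda>k. x k + y k) z = a x z + a y z"
      unfolding a_def by (simp add: decP_add Dh_add[OF S] lumped_add1[OF S])
  next
    fix c x z show "a (\<lambda>k. c * x k) z = c * a x z"
      unfolding a_def by (simp add: decP_smul Dh_smul[OF S] lumped_smul1[OF S])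
  next
    fix x y show "a x y = a y x" unfolding a_def by (rule lumped_sym[OF S])
  next
    fix x assume x: "x \<in> VI (IP S)" "x \<noteq> (\<lambda>k. 0)"
    have pL: "decP x \<in> Lh S" using decP_in[OF x(1)] .
    have "Dh S (decP x) \<noteq> zeroT"
    proof
      assume z: "Dh S (decP x) = zeroT"
      have "\<forall>v\<in>Hh0 S. ipB S (emb S (decP x)) (emb S (divB S v)) = 0"
      proof
        fix v assume v: "v \<in> Hh0 S"
        have "rhs S (decP x) v = lumped S (Dh S (decP x)) v" using Dh_char(2)[OF S] v by simp
        also have "\<dots> = 0" using z lumped_zero1[OF S] by simp
        finally show "ipB S (emb S (decP x)) (emb S (divB S v)) = 0" unfolding rhs_def by simp
      qed
      hence "decP x = (\<lambda>\<tau>. 0, \<lambda>i. 0)" using nullspace[OF S pL] by blast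
      thus False using decP_zero x(2) by blast
    qed
    thus "0 < a x x" unfolding a_def using lumped_pos[OF S Dh_char(1)[OF S]] by blast
  next
    fix x y show "l (\<lambda>k. x k + y k) = l x + l y"
      unfolding l_def by (simp add: decP_add ipBr_add[OF S r])
  next
    fix c x show "l (\<lambda>k. c * x k) = c * l x"
      unfolding l_def by (simp add: decP_smul ipBr_smul[OF S r])
  qed
  from G_exists[OF IP_finite[OF S] G] obtain x0 where x0: "x0 \<in> VI (IP S)"
    "\<forall>w\<in>VI (IP S). a x0 w = l w" by blast
  have ex: "decP x0 \<in> Lh S \<and> (\<forall>w \<in> Lh S. lumped S (Dh S (decP x0)) (Dh S w) = ipB S (rD, rN) (emb S w))"
  proof (intro conjI ballI)
    show "decP x0 \<in> Lh S" by (rule decP_in[OF x0(1)])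
    fix w assume w: "w \<in> Lh S"
    show "lumped S (Dh S (decP x0)) (Dh S w) = ipB S (rD, rN) (emb S w)"
      using x0(2) encP_in[OF w] decP_encP[of w] unfolding a_def l_def by metis
  qed
  show ?thesis
  proof (rule ex1I[of _ "decP x0"])
    show "decP x0 \<in> Lh S \<and> (\<forall>w \<in> Lh S. lumped S (Dh S (decP x0)) (Dh S w) = ipB S (rD, rN) (emb S w))" by (rule ex)
  next
    fix p assume p: "p \<in> Lh S \<and> (\<forall>w \<in> Lh S. lumped S (Dh S p) (Dh S w) = ipB S (rD, rN) (emb S w))"
    have "\<forall>w\<in>VI (IP S). a (encP p) w = l w"
      using p decP_in unfolding a_def l_def decP_encP by blast
    hence "encP p = x0" using G_unique[OF G encP_in x0(1)] p x0(2) by blast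
    thus "p = decP x0" using decP_encP[of p] by simp
  qed
qed

end
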